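(* For any $\delta\in(0,1)$ and $\epsilon\in(0,1-\delta)$ there exists a constant $c>0$ depending only on $\epsilon$ such that for all $\tau,p\in\mathbb N$, $k\in[p]$, $\phi>0$, $\sigma>0$: (1) if $(\phi^2/\sigma^2)\tau\le c\,v(k,p)$ then for every $n\ge\tau$, $$\inf_{\hat\tau\in\mathcal T(\delta)}\sup_{\theta\in\Theta(k,p,\tau,\phi)}\mathbb P_\theta(\hat\tau-\tau>n)\ge1-\delta-\epsilon;$$ (2) if $(\phi^2/\sigma^2)\tau>c\,v(k,p)$ then $$\inf_{\hat\tau\in\mathcal T(\delta)}\sup_{\theta\in\Theta(k,p,\tau,\phi)}\mathbb P_\theta\Big(\hat\tau-\tau>c\frac{\sigma^2}{\phi^2}v(k,p)\Big)\ge1-\delta-\epsilon.$$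
   Context: $\log$ natural. For a sequence $\theta=(\theta_i)_{i\in\mathbb N}$ of vectors in $\mathbb R^p$, $\mathbb P_\theta$ denotes the law of independent $Y_i\sim N_p(\theta_i,\sigma^2I)$, $i\in\mathbb N$. An extended stopping time is a random variable $\hat\tau$ with values in $\mathbb N\cup\{\infty\}$ such that $\{\hat\tau=t\}\in\sigma(Y_1,\dots,Y_t)$ for all $t$. $\Theta_0(p)$ is the set of constant sequences ($\theta_i=\mu$ for all $i$, some $\mu\in\mathbb R^p$); $\mathcal T(\delta)$ is the set of extended stopping times with $\mathbb P_\theta(\hat\tau<\infty)\le\delta$ for every $\theta\in\Theta_0(p)$. $\Theta(k,p,\tau,\phi)$ is the set of sequences for which there exist $\mu_1,\mu_2\in\mathbb R^p$ with $\theta_i=\mu_1$ for $i\le\tau$, $\theta_i=\mu_2$ for $i\ge\tau+1$, $\|\mu_1-\mu_2\|_2=\phi$ and $\|\mu_1-\mu_2\|_0\le k$ (number of nonzero entries). $v(k,p)=\sqrt p$ if $k>\sqrt p$, and $v(k,p)=k\log(ep/k^2)$ otherwise. *)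

theory Defs
  imports "HOL-Probability.Probability"
begin

text \<open>Observations are indexed by i \<in> {1..}; each observation Y_i is a vector in R^p,
  represented as a function nat \<Rightarrow> real with coordinates j \<in> {..<p}.\<close>

type_synonym obs_seq = "nat \<Rightarrow> nat \<Rightarrow> real"

definition obs_law :: "nat \<Rightarrow> real \<Rightarrow> obs_seq \<Rightarrow> obs_seq measure" where
  "obs_law p \<sigma> \<theta> =
     PiM {1..} (\<lambda>i. PiM {..<p} (\<lambda>j. density lborel (normal_density (\<theta> i j) \<sigma>)))"

definition obs_space :: "nat \<Rightarrow> obs_seq measure" where
  "obs_space p = PiM {1..} (\<lambda>i. PiM {..<p} (\<lambda>j. (borel :: real measure)))"

definition obs_sigma :: "nat \<Rightarrow> nat \<Rightarrow> obs_seq measure" where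
  "obs_sigma p t = vimage_algebra (space (obs_space p)) (\<lambda>\<omega>. restrict \<omega> {1..t})
      (PiM {1..t} (\<lambda>i. PiM {..<p} (\<lambda>j. (borel :: real measure))))"

definition ext_stopping_time :: "nat \<Rightarrow> (obs_seq \<Rightarrow> enat) \<Rightarrow> bool" where
  "ext_stopping_time p T \<longleftrightarrow>
     (\<forall>\<omega>\<in>space (obs_space p). T \<omega> \<noteq> 0) \<and>
     (\<forall>t::nat. {\<omega>\<in>space (obs_space p). T \<omega> = enat t} \<in> sets (obs_sigma p t))"

definition l2norm :: "nat \<Rightarrow> (nat \<Rightarrow> real) \<Rightarrow> real" where
  "l2norm p x = sqrt (\<Sum>j<p. (x j)\<^sup>2)"

definition l0norm :: "nat \<Rightarrow> (nat \<Rightarrow> real) \<Rightarrow> nat" where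
  "l0norm p x = card {j. j < p \<and> x j \<noteq> 0}"

definition Theta0 :: "nat \<Rightarrow> obs_seq set" where
  "Theta0 p = {\<theta>. \<exists>\<mu>. \<forall>i\<ge>1. \<theta> i = \<mu>}"

definition ThetaCP :: "nat \<Rightarrow> nat \<Rightarrow> nat \<Rightarrow> real \<Rightarrow> obs_seq set" where
  "ThetaCP k p \<tau> \<phi> = {\<theta>. \<exists>\<mu>1 \<mu>2.
      (\<forall>i. 1 \<le> i \<and> i \<le> \<tau> \<longrightarrow> \<theta> i = \<mu>1) \<and> (\<forall>i\<ge>\<tau>+1. \<theta> i = \<mu>2) \<and>
      l2norm p (\<lambda>j. \<mu>1 j - \<mu>2 j) = \<phi> \<and> l0norm p (\<lambda>j. \<mu>1 j - \<mu>2 j) \<le> k}"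

definition TT :: "nat \<Rightarrow> real \<Rightarrow> real \<Rightarrow> (obs_seq \<Rightarrow> enat) set" where
  "TT p \<sigma> \<delta> = {T. ext_stopping_time p T \<and>
      (\<forall>\<theta>\<in>Theta0 p. measure (obs_law p \<sigma> \<theta>)
           {\<omega>\<in>space (obs_law p \<sigma> \<theta>). T \<omega> < \<infinity>} \<le> \<delta>)}"

definition vkp :: "nat \<Rightarrow> nat \<Rightarrow> real" where
  "vkp k p = (if real k > sqrt (real p) then sqrt (real p)
              else real k * ln (exp 1 * real p / (real k)\<^sup>2))"

end

theory Submission
  imports Defs
begin


lemma PiM_density:
  fixes M :: "'i \<Rightarrow> 'a measure" and f :: "'i \<Rightarrow> 'a \<Rightarrow> ennreal"
  assumes I: "finite I"
    and sf: "\<And>i. sigma_finite_measure (M i)"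
    and sfd: "\<And>i. sigma_finite_measure (density (M i) (f i))"
    and fm[measurable]: "\<And>i. f i \<in> borel_measurable (M i)"
  shows "PiM I (\<lambda>i. density (M i) (f i)) = density (PiM I M) (\<lambda>x. \<Prod>i\<in>I. f i (x i))"
proof -
  interpret D: product_sigma_finite "\<lambda>i. density (M i) (f i)"
    using sfd by (simp add: product_sigma_finite_def)
  interpret P: product_sigma_finite M
    using sf by (simp add: product_sigma_finite_def)
  have sets_eq: "sets (PiM I (\<lambda>i. density (M i) (f i))) = sets (PiM I M)"
    by (rule sets_PiM_cong) auto
  have meas: "(\<lambda>x. \<Prod>i\<in>I. f i (x i)) \<in> borel_measurable (PiM I M)"
    by measurable
  show ?thesis
  proof (rule D.PiM_eqI[symmetric, OF I])
    show "sets (density (PiM I M) (\<lambda>x. \<Prod>i\<in>I. f i (x i))) = sets (PiM I (\<lambda>i. density (M i) (f i)))"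
      using sets_eq by simp
    fix A assume A: "\<And>i. i \<in> I \<Longrightarrow> A i \<in> sets (density (M i) (f i))"
    then have A': "\<And>i. i \<in> I \<Longrightarrow> A i \<in> sets (M i)" by simp
    have PA: "Pi\<^sub>E I A \<in> sets (PiM I M)"
      using A' by (rule sets_PiM_I_finite[OF I])
    have ind: "(\<Prod>i\<in>I. f i (x i)) * indicator (Pi\<^sub>E I A) x = (\<Prod>i\<in>I. f i (x i) * indicator (A i) (x i))"
      if x: "x \<in> space (PiM I M)" for x
    proof -
      have "indicator (Pi\<^sub>E I A) x = (\<Prod>i\<in>I. indicator (A i) (x i) :: ennreal)"
        using x I by (auto simp: indicator_def space_PiM PiE_def Pi_def extensional_def)
      then show ?thesis by (simp add: prod.distrib)
    qed
    have "emeasure (density (PiM I M) (\<lambda>x. \<Prod>i\<in>I. f i (x i))) (Pi\<^sub>E I A)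
        = (\<integral>\<^sup>+x. (\<Prod>i\<in>I. f i (x i)) * indicator (Pi\<^sub>E I A) x \<partial>PiM I M)"
      using PA meas by (simp add: emeasure_density)
    also have "\<dots> = (\<integral>\<^sup>+x. (\<Prod>i\<in>I. f i (x i) * indicator (A i) (x i)) \<partial>PiM I M)"
      by (rule nn_integral_cong) (simp add: ind)
    also have "\<dots> = (\<Prod>i\<in>I. \<integral>\<^sup>+y. f i y * indicator (A i) y \<partial>M i)"
      by (rule P.product_nn_integral_prod[OF I]) (use A' in measurable)
    also have "\<dots> = (\<Prod>i\<in>I. emeasure (density (M i) (f i)) (A i))"
      using A' by (intro prod.cong refl) (simp add: emeasure_density)
    finally show "emeasure (density (PiM I M) (\<lambda>x. \<Prod>i\<in>I. f i (x i))) (Pi\<^sub>E I A) = (\<Prod>i\<in>I. emeasure (density (M i) (f i)) (A i))" .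
  qed
qed



lemma normal_ratio:
  assumes s: "\<sigma> > 0"
  shows "normal_density a \<sigma> z * normal_density b \<sigma> z / normal_density 0 \<sigma> z
       = exp (a * b / \<sigma>\<^sup>2) * normal_density (a + b) \<sigma> z"
proof -
  define s where "s = sqrt (2 * pi * \<sigma>\<^sup>2)"
  have sp: "s > 0" using s by (simp add: s_def)
  have e: "-(z - a)\<^sup>2 / (2 * \<sigma>\<^sup>2) + -(z - b)\<^sup>2 / (2 * \<sigma>\<^sup>2) - -(z - 0)\<^sup>2 / (2 * \<sigma>\<^sup>2)
      = a * b / \<sigma>\<^sup>2 + -(z - (a + b))\<^sup>2 / (2 * \<sigma>\<^sup>2)"
    using s by (simp add: field_simps power2_eq_square)
  have "normal_density a \<sigma> z * normal_density b \<sigma> z / normal_density 0 \<sigma> z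
      = (1/s) * (exp (-(z - a)\<^sup>2 / (2 * \<sigma>\<^sup>2)) * exp (-(z - b)\<^sup>2 / (2 * \<sigma>\<^sup>2)) / exp (-(z - 0)\<^sup>2 / (2 * \<sigma>\<^sup>2)))"
    unfolding normal_density_def s_def[symmetric] using sp by (simp add: field_simps)
  also have "\<dots> = (1/s) * exp (a * b / \<sigma>\<^sup>2 + -(z - (a + b))\<^sup>2 / (2 * \<sigma>\<^sup>2))"
    by (simp only: exp_add[symmetric] exp_diff[symmetric] e)
  also have "\<dots> = exp (a * b / \<sigma>\<^sup>2) * normal_density (a + b) \<sigma> z"
    unfolding normal_density_def s_def[symmetric]
    by (simp only: exp_add mult_ac)
  finally show ?thesis .
qed

lemma nn_integral_normal: "\<sigma> > 0 \<Longrightarrow> (\<integral>\<^sup>+z. ennreal (normal_density m \<sigma> z) \<partial>lborel) = 1"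
  using prob_space.emeasure_space_1[OF prob_space_normal_density[of \<sigma> m]]
  by (simp add: emeasure_density)

lemma nn_integral_normal_ratio:
  assumes s: "\<sigma> > 0"
  shows "(\<integral>\<^sup>+z. ennreal (normal_density a \<sigma> z * normal_density b \<sigma> z / normal_density 0 \<sigma> z) \<partial>lborel)
     = ennreal (exp (a * b / \<sigma>\<^sup>2))"
proof -
  have "(\<integral>\<^sup>+z. ennreal (normal_density a \<sigma> z * normal_density b \<sigma> z / normal_density 0 \<sigma> z) \<partial>lborel)
     = (\<integral>\<^sup>+z. ennreal (exp (a * b / \<sigma>\<^sup>2)) * ennreal (normal_density (a + b) \<sigma> z) \<partial>lborel)"
    by (rule nn_integral_cong) (simp add: normal_ratio[OF s] ennreal_mult)
  also have "\<dots> = ennreal (exp (a * b / \<sigma>\<^sup>2)) * (\<integral>\<^sup>+z. ennreal (normal_density (a + b) \<sigma> z) \<partial>lborel)"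
    by (rule nn_integral_cmult) simp
  also have "\<dots> = ennreal (exp (a * b / \<sigma>\<^sup>2))" using nn_integral_normal[OF s] by simp
  finally show ?thesis .
qed

definition compM :: "nat \<Rightarrow> real \<Rightarrow> (nat \<Rightarrow> nat \<Rightarrow> real) \<Rightarrow> nat \<Rightarrow> (nat \<Rightarrow> real) measure" where
  "compM p \<sigma> \<theta> i = PiM {..<p} (\<lambda>j. density lborel (normal_density (\<theta> i j) \<sigma>))"

definition Qm :: "nat \<Rightarrow> nat \<Rightarrow> (nat \<Rightarrow> nat \<Rightarrow> real) measure" where
  "Qm p N = PiM {1..N} (\<lambda>i. PiM {..<p} (\<lambda>j. lborel))"

definition Gd :: "nat \<Rightarrow> real \<Rightarrow> (nat \<Rightarrow> nat \<Rightarrow> real) \<Rightarrow> nat \<Rightarrow> (nat \<Rightarrow> nat \<Rightarrow> real) \<Rightarrow> real" where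
  "Gd p \<sigma> \<theta> N x = (\<Prod>i\<in>{1..N}. \<Prod>j\<in>{..<p}. normal_density (\<theta> i j) \<sigma> (x i j))"

lemma prob_space_compM: "\<sigma> > 0 \<Longrightarrow> prob_space (compM p \<sigma> \<theta> i)"
proof -
  assume s: "\<sigma> > 0"
  interpret product_prob_space "\<lambda>j. density lborel (normal_density (\<theta> i j) \<sigma>)" "{..<p}"
    by (simp add: product_prob_space_def product_prob_space_axioms_def product_sigma_finite_def
        prob_space_normal_density s prob_space_imp_sigma_finite)
  show ?thesis unfolding compM_def by (rule P.prob_space_axioms)
qed

lemma compM_density:
  assumes s: "\<sigma> > 0"
  shows "compM p \<sigma> \<theta> i = density (PiM {..<p} (\<lambda>j. lborel))
           (\<lambda>y. \<Prod>j\<in>{..<p}. ennreal (normal_density (\<theta> i j) \<sigma> (y j)))"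
proof -
  have "PiM {..<p} (\<lambda>j. density lborel (\<lambda>y. ennreal (normal_density (\<theta> i j) \<sigma> y))) = density (PiM {..<p} (\<lambda>j. lborel))
           (\<lambda>y. \<Prod>j\<in>{..<p}. ennreal (normal_density (\<theta> i j) \<sigma> (y j)))"
    apply (rule PiM_density[of "{..<p}" "\<lambda>j. lborel" "\<lambda>j y. ennreal (normal_density (\<theta> i j) \<sigma> y)"])
    apply simp
    apply (rule lborel.sigma_finite_measure_axioms)
    apply (rule prob_space_imp_sigma_finite, rule prob_space_normal_density, rule s)
    apply simp
    done
  then show ?thesis unfolding compM_def by simp
qed

lemma sf_PiM_lborel: "sigma_finite_measure (PiM {..<p::nat} (\<lambda>j. (lborel::real measure)))"
proof -
  interpret finite_product_sigma_finite "\<lambda>j. (lborel::real measure)" "{..<p}"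
    by (simp add: finite_product_sigma_finite_def product_sigma_finite_def lborel.sigma_finite_measure_axioms finite_product_sigma_finite_axioms_def)
  show ?thesis by (rule sigma_finite_measure_axioms)
qed

lemma meas_ij:
  assumes "i \<in> I" "j \<in> J"
  shows "(\<lambda>x. x i j) \<in> measurable (PiM I (\<lambda>i. PiM J (\<lambda>j. M))) M"
proof -
  have 1: "(\<lambda>x. x i) \<in> measurable (PiM I (\<lambda>i. PiM J (\<lambda>j. M))) (PiM J (\<lambda>j. M))"
    by (rule measurable_component_singleton[OF assms(1)])
  have 2: "(\<lambda>y. y j) \<in> measurable (PiM J (\<lambda>j. M)) M"
    by (rule measurable_component_singleton[OF assms(2)])
  from measurable_compose[OF 1 2] show ?thesis by simp
qed

lemma Gd_meas: "(\<lambda>x. Gd p \<sigma> \<theta> N x) \<in> borel_measurable (Qm p N)"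
  unfolding Gd_def Qm_def
proof (intro borel_measurable_prod)
  fix i j assume "i \<in> {1..N}" "j \<in> {..<p}"
  from meas_ij[OF this, of lborel]
  have "(\<lambda>x. x i j) \<in> borel_measurable (PiM {1..N} (\<lambda>i. PiM {..<p} (\<lambda>j. lborel)))"
    by (simp add: measurable_lborel1)
  then show "(\<lambda>x. normal_density (\<theta> i j) \<sigma> (x i j)) \<in> borel_measurable (PiM {1..N} (\<lambda>i. PiM {..<p} (\<lambda>j. lborel)))"
    by (rule measurable_compose) simp
qed

lemma PN_density:
  assumes s: "\<sigma> > 0"
  shows "PiM {1..N} (compM p \<sigma> \<theta>) = density (Qm p N) (\<lambda>x. ennreal (Gd p \<sigma> \<theta> N x))"
proof -
  have "PiM {1..N} (compM p \<sigma> \<theta>) = PiM {1..N} (\<lambda>i. density (PiM {..<p} (\<lambda>j. lborel))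
           (\<lambda>y. \<Prod>j\<in>{..<p}. ennreal (normal_density (\<theta> i j) \<sigma> (y j))))"
    by (rule PiM_cong) (simp_all add: compM_density[OF s])
  also have "\<dots> = density (Qm p N) (\<lambda>x. \<Prod>i\<in>{1..N}. \<Prod>j\<in>{..<p}. ennreal (normal_density (\<theta> i j) \<sigma> (x i j)))"
    unfolding Qm_def
    apply (rule PiM_density[of "{1..N}" "\<lambda>i. PiM {..<p} (\<lambda>j. lborel)" "\<lambda>i y. \<Prod>j\<in>{..<p}. ennreal (normal_density (\<theta> i j) \<sigma> (y j))"])
    apply simp
    apply (rule sf_PiM_lborel)
    apply (simp only: compM_density[OF s, symmetric])
    apply (rule prob_space_imp_sigma_finite, rule prob_space_compM, rule s)
    apply measurable
    done
  also have "\<dots> = density (Qm p N) (\<lambda>x. ennreal (Gd p \<sigma> \<theta> N x))"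
  proof -
    have eq: "(\<lambda>x. \<Prod>i\<in>{1..N}. \<Prod>j\<in>{..<p}. ennreal (normal_density (\<theta> i j) \<sigma> (x i j))) = (\<lambda>x. ennreal (Gd p \<sigma> \<theta> N x))"
      by (auto simp: Gd_def prod_ennreal prod_nonneg normal_density_nonneg)
    show ?thesis by (simp only: eq)
  qed
  finally show ?thesis .
qed



lemma Gd_pos: "\<sigma> > 0 \<Longrightarrow> Gd p \<sigma> \<theta> N x > 0"
  unfolding Gd_def by (intro prod_pos) (simp add: normal_density_pos)

definition rat :: "real \<Rightarrow> real \<Rightarrow> real \<Rightarrow> real \<Rightarrow> real" where
  "rat \<sigma> a b z = normal_density a \<sigma> z * normal_density b \<sigma> z / normal_density 0 \<sigma> z"

lemma rat_meas[measurable]: "rat \<sigma> a b \<in> borel_measurable borel"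
  unfolding rat_def by measurable

lemma rat_nonneg: "rat \<sigma> a b z \<ge> 0"
  unfolding rat_def by simp

lemma Gd_ratio:
  assumes s: "\<sigma> > 0"
  shows "Gd p \<sigma> \<theta> N x * Gd p \<sigma> \<theta>' N x / Gd p \<sigma> (\<lambda>i j. 0) N x
       = (\<Prod>i\<in>{1..N}. \<Prod>j\<in>{..<p}. rat \<sigma> (\<theta> i j) (\<theta>' i j) (x i j))"
  unfolding Gd_def rat_def by (simp add: prod.distrib prod_dividef)

lemma int_ratio:
  assumes s: "\<sigma> > 0"
  shows "(\<integral>\<^sup>+x. ennreal (Gd p \<sigma> \<theta> N x * Gd p \<sigma> \<theta>' N x / Gd p \<sigma> (\<lambda>i j. 0) N x) \<partial>Qm p N)
     = ennreal (\<Prod>i\<in>{1..N}. \<Prod>j\<in>{..<p}. exp (\<theta> i j * \<theta>' i j / \<sigma>\<^sup>2))"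
proof -
  interpret O: product_sigma_finite "\<lambda>i::nat. PiM {..<p} (\<lambda>j. (lborel::real measure))"
    by (simp add: product_sigma_finite_def sf_PiM_lborel)
  interpret I: product_sigma_finite "\<lambda>j::nat. (lborel::real measure)"
    by (simp add: product_sigma_finite_def lborel.sigma_finite_measure_axioms)
  have inner_meas: "(\<lambda>y. \<Prod>j\<in>{..<p}. ennreal (rat \<sigma> (\<theta> i j) (\<theta>' i j) (y j))) \<in> borel_measurable (PiM {..<p} (\<lambda>j. lborel))" for i
    by measurable
  have "(\<integral>\<^sup>+x. ennreal (Gd p \<sigma> \<theta> N x * Gd p \<sigma> \<theta>' N x / Gd p \<sigma> (\<lambda>i j. 0) N x) \<partial>Qm p N)
      = (\<integral>\<^sup>+x. (\<Prod>i\<in>{1..N}. (\<lambda>i y. \<Prod>j\<in>{..<p}. ennreal (rat \<sigma> (\<theta> i j) (\<theta>' i j) (y j))) i (x i)) \<partial>Qm p N)"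
    by (rule nn_integral_cong) (simp add: Gd_ratio[OF s] prod_ennreal prod_nonneg rat_nonneg)
  also have "\<dots> = (\<Prod>i\<in>{1..N}. \<integral>\<^sup>+y. (\<Prod>j\<in>{..<p}. ennreal (rat \<sigma> (\<theta> i j) (\<theta>' i j) (y j))) \<partial>PiM {..<p} (\<lambda>j. lborel))"
    unfolding Qm_def by (rule O.product_nn_integral_prod) (simp_all add: inner_meas)
  also have "\<dots> = (\<Prod>i\<in>{1..N}. \<Prod>j\<in>{..<p}. \<integral>\<^sup>+z. ennreal (rat \<sigma> (\<theta> i j) (\<theta>' i j) z) \<partial>lborel)"
  proof (rule prod.cong[OF refl])
    fix i
    show "(\<integral>\<^sup>+y. (\<Prod>j\<in>{..<p}. ennreal (rat \<sigma> (\<theta> i j) (\<theta>' i j) (y j))) \<partial>PiM {..<p} (\<lambda>j. lborel))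
        = (\<Prod>j\<in>{..<p}. \<integral>\<^sup>+z. ennreal (rat \<sigma> (\<theta> i j) (\<theta>' i j) z) \<partial>lborel)"
      using I.product_nn_integral_prod[of "{..<p}" "\<lambda>j z. ennreal (rat \<sigma> (\<theta> i j) (\<theta>' i j) z)"]
      by (simp add: measurable_lborel1)
  qed
  also have "\<dots> = (\<Prod>i\<in>{1..N}. \<Prod>j\<in>{..<p}. ennreal (exp (\<theta> i j * \<theta>' i j / \<sigma>\<^sup>2)))"
    unfolding rat_def by (simp add: nn_integral_normal_ratio[OF s])
  also have "\<dots> = ennreal (\<Prod>i\<in>{1..N}. \<Prod>j\<in>{..<p}. exp (\<theta> i j * \<theta>' i j / \<sigma>\<^sup>2))"
    by (simp add: prod_ennreal prod_nonneg)
  finally show ?thesis .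
qed

lemma int_Gd: "\<sigma> > 0 \<Longrightarrow> (\<integral>\<^sup>+x. ennreal (Gd p \<sigma> \<theta> N x) \<partial>Qm p N) = 1"
proof -
  assume s: "\<sigma> > 0"
  interpret product_prob_space "compM p \<sigma> \<theta>" "{1..N}"
    by (simp add: product_prob_space_def product_prob_space_axioms_def product_sigma_finite_def
        prob_space_compM s prob_space_imp_sigma_finite)
  have "emeasure (density (Qm p N) (\<lambda>x. ennreal (Gd p \<sigma> \<theta> N x))) (space (density (Qm p N) (\<lambda>x. ennreal (Gd p \<sigma> \<theta> N x)))) = 1"
    using P.emeasure_space_1 by (simp only: PN_density[OF s])
  moreover have m: "(\<lambda>x. ennreal (Gd p \<sigma> \<theta> N x)) \<in> borel_measurable (Qm p N)"
    by (rule measurable_compose[OF Gd_meas]) simp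
  moreover have "(\<integral>\<^sup>+x. ennreal (Gd p \<sigma> \<theta> N x) * indicator (space (Qm p N)) x \<partial>Qm p N) = (\<integral>\<^sup>+x. ennreal (Gd p \<sigma> \<theta> N x) \<partial>Qm p N)"
    by (rule nn_integral_cong) simp
  ultimately show ?thesis
    by (simp add: emeasure_density[OF m sets.top])
qed



declare Gd_meas[measurable]

lemma ennreal_cancel_aux:
  assumes "X + 2 = ennreal a + 1" "a \<le> 1 + e" "a \<ge> 0"
  shows "X \<le> ennreal e"
proof (cases X rule: ennreal_cases)
  case (real x)
  have e1: "ennreal (x + 2) = ennreal x + 2" using real by (simp add: ennreal_plus)
  have e2: "ennreal (a + 1) = ennreal a + 1" using assms(3) by (simp add: ennreal_plus)
  have h: "ennreal (x + 2) = ennreal (a + 1)" using assms(1) real e1 e2 by simp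
  have "x + 2 = a + 1" by (rule ennreal_inj[THEN iffD1, OF _ _ h]) (use real assms(3) in auto)
  then show ?thesis using real assms by (simp add: ennreal_leI)
next
  case top
  have "ennreal a + 1 = ennreal (a+1)" using assms(3) by (simp add: ennreal_plus)
  then show ?thesis using assms(1) top by simp
qed

lemma am_gm_aux:
  fixes gb g0 e :: real
  assumes "g0 > 0" "e > 0"
  shows "gb \<le> g0 + (e/2) * g0 + (1/(2*e)) * ((gb - g0)\<^sup>2 / g0)"
proof -
  have "0 \<le> (e * g0 - (gb - g0))\<^sup>2" by simp
  then have "2 * e * g0 * (gb - g0) \<le> e\<^sup>2 * g0\<^sup>2 + (gb - g0)\<^sup>2"
    by (simp add: power2_eq_square algebra_simps)
  then have "(gb - g0) \<le> (e\<^sup>2 * g0\<^sup>2 + (gb - g0)\<^sup>2) / (2 * e * g0)"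
    using assms by (simp add: field_simps)
  also have "\<dots> = (e/2) * g0 + (1/(2*e)) * ((gb - g0)\<^sup>2 / g0)"
    using assms by (simp add: field_simps power2_eq_square)
  finally show ?thesis by simp
qed

lemma mixture_bound:
  fixes \<theta> :: "'g \<Rightarrow> nat \<Rightarrow> nat \<Rightarrow> real"
  assumes s: "\<sigma> > 0" and G: "finite G" "G \<noteq> {}" and e: "\<epsilon> > 0"
    and B: "B \<in> sets (Qm p N)"
    and chi: "(\<Sum>g\<in>G. \<Sum>g'\<in>G. \<Prod>i\<in>{1..N}. \<Prod>j\<in>{..<p}. exp (\<theta> g i j * \<theta> g' i j / \<sigma>\<^sup>2))
               \<le> (1 + \<epsilon>\<^sup>2) * real (card G) ^ 2"
  shows "ennreal (1 / real (card G)) * (\<Sum>g\<in>G. \<integral>\<^sup>+x. ennreal (Gd p \<sigma> (\<theta> g) N x) * indicator B x \<partial>Qm p N)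
      \<le> (\<integral>\<^sup>+x. ennreal (Gd p \<sigma> (\<lambda>i j. 0) N x) * indicator B x \<partial>Qm p N) + ennreal \<epsilon>"
proof -
  define n where "n = real (card G)"
  have n: "n > 0" using G by (simp add: n_def card_gt_0_iff)
  define g0 where "g0 x = Gd p \<sigma> (\<lambda>i j. 0) N x" for x
  define gb where "gb x = (1/n) * (\<Sum>g\<in>G. Gd p \<sigma> (\<theta> g) N x)" for x
  define S where "S = (\<Sum>g\<in>G. \<Sum>g'\<in>G. \<Prod>i\<in>{1..N}. \<Prod>j\<in>{..<p}. exp (\<theta> g i j * \<theta> g' i j / \<sigma>\<^sup>2))"
  have g0p: "g0 x > 0" for x unfolding g0_def by (rule Gd_pos[OF s])
  have gbn: "gb x \<ge> 0" for x unfolding gb_def using n Gd_pos[OF s]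
    by (intro mult_nonneg_nonneg sum_nonneg) (auto intro: less_imp_le)
  have Snn: "S \<ge> 0" unfolding S_def by (intro sum_nonneg prod_nonneg) auto
  have [measurable]: "g0 \<in> borel_measurable (Qm p N)" unfolding g0_def by measurable
  have [measurable]: "gb \<in> borel_measurable (Qm p N)" unfolding gb_def by measurable
  have [measurable]: "B \<in> sets (Qm p N)" by (rule B)
  have I0: "(\<integral>\<^sup>+x. ennreal (g0 x) \<partial>Qm p N) = 1" unfolding g0_def by (rule int_Gd[OF s])
  have Ib: "(\<integral>\<^sup>+x. ennreal (gb x) \<partial>Qm p N) = 1"
  proof -
    have "(\<integral>\<^sup>+x. ennreal (gb x) \<partial>Qm p N) = (\<integral>\<^sup>+x. ennreal (1/n) * (\<Sum>g\<in>G. ennreal (Gd p \<sigma> (\<theta> g) N x)) \<partial>Qm p N)"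
      unfolding gb_def using n Gd_pos[OF s]
      by (intro nn_integral_cong) (simp add: ennreal_mult[symmetric] sum_nonneg less_imp_le sum_ennreal)
    also have "\<dots> = ennreal (1/n) * (\<Sum>g\<in>G. \<integral>\<^sup>+x. ennreal (Gd p \<sigma> (\<theta> g) N x) \<partial>Qm p N)"
      by (simp add: nn_integral_cmult nn_integral_sum)
    also have "\<dots> = ennreal (1/n) * ennreal n"
      by (simp add: int_Gd[OF s] n_def ennreal_of_nat_eq_real_of_nat)
    also have "\<dots> = 1" using n by (simp add: ennreal_mult[symmetric])
    finally show ?thesis .
  qed
  have I2: "(\<integral>\<^sup>+x. ennreal ((gb x)\<^sup>2 / g0 x) \<partial>Qm p N) = ennreal (S / n\<^sup>2)"
  proof -
    have pw: "(gb x)\<^sup>2 / g0 x = (1/n\<^sup>2) * (\<Sum>g\<in>G. \<Sum>g'\<in>G. Gd p \<sigma> (\<theta> g) N x * Gd p \<sigma> (\<theta> g') N x / Gd p \<sigma> (\<lambda>i j. 0) N x)" for x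
      unfolding gb_def g0_def
      by (simp add: power2_eq_square sum_distrib_left sum_distrib_right sum_divide_distrib algebra_simps)
    have "(\<integral>\<^sup>+x. ennreal ((gb x)\<^sup>2 / g0 x) \<partial>Qm p N)
        = (\<integral>\<^sup>+x. ennreal (1/n\<^sup>2) * (\<Sum>g\<in>G. \<Sum>g'\<in>G. ennreal (Gd p \<sigma> (\<theta> g) N x * Gd p \<sigma> (\<theta> g') N x / Gd p \<sigma> (\<lambda>i j. 0) N x)) \<partial>Qm p N)"
      using Gd_pos[OF s] n
      by (intro nn_integral_cong) (simp add: pw ennreal_mult[symmetric] sum_nonneg less_imp_le sum_ennreal)
    also have "\<dots> = ennreal (1/n\<^sup>2) * (\<Sum>g\<in>G. \<Sum>g'\<in>G. \<integral>\<^sup>+x. ennreal (Gd p \<sigma> (\<theta> g) N x * Gd p \<sigma> (\<theta> g') N x / Gd p \<sigma> (\<lambda>i j. 0) N x) \<partial>Qm p N)"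
      by (simp add: nn_integral_cmult nn_integral_sum)
    also have "\<dots> = ennreal (1/n\<^sup>2) * ennreal S"
      unfolding S_def by (simp add: int_ratio[OF s] sum_ennreal prod_nonneg sum_nonneg)
    also have "\<dots> = ennreal (S / n\<^sup>2)" using n Snn by (simp add: ennreal_mult[symmetric])
    finally show ?thesis .
  qed
  define X where "X = (\<integral>\<^sup>+x. ennreal ((gb x - g0 x)\<^sup>2 / g0 x) \<partial>Qm p N)"
  have "X + 2 = ennreal (S / n\<^sup>2) + 1"
  proof -
    have "X + 2 = (\<integral>\<^sup>+x. ennreal ((gb x - g0 x)\<^sup>2 / g0 x) + 2 * ennreal (gb x) \<partial>Qm p N)"
      unfolding X_def by (simp add: nn_integral_add nn_integral_cmult Ib)
    also have "\<dots> = (\<integral>\<^sup>+x. ennreal ((gb x)\<^sup>2 / g0 x) + ennreal (g0 x) \<partial>Qm p N)"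
    proof (rule nn_integral_cong)
      fix x
      have "(gb x - g0 x)\<^sup>2 / g0 x + 2 * gb x = (gb x)\<^sup>2 / g0 x + g0 x"
        using g0p[of x] by (simp add: field_simps power2_eq_square)
      then have "ennreal ((gb x - g0 x)\<^sup>2 / g0 x + 2 * gb x) = ennreal ((gb x)\<^sup>2 / g0 x + g0 x)" by simp
      moreover have "ennreal ((gb x - g0 x)\<^sup>2 / g0 x) + 2 * ennreal (gb x) = ennreal ((gb x - g0 x)\<^sup>2 / g0 x + 2 * gb x)"
        using g0p[of x] gbn[of x] by (simp add: ennreal_plus ennreal_mult)
      moreover have "ennreal ((gb x)\<^sup>2 / g0 x) + ennreal (g0 x) = ennreal ((gb x)\<^sup>2 / g0 x + g0 x)"
        using g0p[of x] gbn[of x] by (simp add: ennreal_plus)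
      ultimately show "ennreal ((gb x - g0 x)\<^sup>2 / g0 x) + 2 * ennreal (gb x) = ennreal ((gb x)\<^sup>2 / g0 x) + ennreal (g0 x)"
        by simp
    qed
    also have "\<dots> = ennreal (S / n\<^sup>2) + 1"
      by (simp add: nn_integral_add I2 I0)
    finally show ?thesis .
  qed
  then have Xle: "X \<le> ennreal (\<epsilon>\<^sup>2)"
    by (rule ennreal_cancel_aux) (use chi n Snn in \<open>auto simp: S_def n_def field_simps\<close>)
  have "(\<integral>\<^sup>+x. ennreal (gb x) * indicator B x \<partial>Qm p N)
      \<le> (\<integral>\<^sup>+x. ennreal (g0 x) * indicator B x + ennreal (\<epsilon>/2) * ennreal (g0 x)
             + ennreal (1/(2*\<epsilon>)) * ennreal ((gb x - g0 x)\<^sup>2 / g0 x) \<partial>Qm p N)"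
  proof (rule nn_integral_mono)
    fix x
    have "ennreal (gb x) \<le> ennreal (g0 x + (\<epsilon>/2) * g0 x + (1/(2*\<epsilon>)) * ((gb x - g0 x)\<^sup>2 / g0 x))"
      by (rule ennreal_leI, rule am_gm_aux[OF g0p e])
    also have "\<dots> = ennreal (g0 x) + ennreal (\<epsilon>/2) * ennreal (g0 x) + ennreal (1/(2*\<epsilon>)) * ennreal ((gb x - g0 x)\<^sup>2 / g0 x)"
    proof -
      define A where "A = (\<epsilon>/2) * g0 x"
      define Bq where "Bq = (1/(2*\<epsilon>)) * ((gb x - g0 x)\<^sup>2 / g0 x)"
      have An: "A \<ge> 0" unfolding A_def using g0p[of x] e by simp
      have Bn: "Bq \<ge> 0" unfolding Bq_def using g0p[of x] e by simp
      have a1: "ennreal (\<epsilon>/2) * ennreal (g0 x) = ennreal A"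
        unfolding A_def using g0p[of x] e by (simp add: ennreal_mult[symmetric])
      have a2: "ennreal (1/(2*\<epsilon>)) * ennreal ((gb x - g0 x)\<^sup>2 / g0 x) = ennreal Bq"
        unfolding Bq_def using g0p[of x] e by (simp add: ennreal_mult[symmetric])
      have "ennreal (g0 x + A + Bq) = ennreal (g0 x) + ennreal A + ennreal Bq"
        using An Bn g0p[of x] by (simp add: ennreal_plus)
      then show ?thesis unfolding a1 a2 by (simp add: A_def Bq_def)
    qed
    finally have *: "ennreal (gb x) \<le> ennreal (g0 x) + ennreal (\<epsilon>/2) * ennreal (g0 x) + ennreal (1/(2*\<epsilon>)) * ennreal ((gb x - g0 x)\<^sup>2 / g0 x)" .
    show "ennreal (gb x) * indicator B x \<le> ennreal (g0 x) * indicator B x + ennreal (\<epsilon>/2) * ennreal (g0 x)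
             + ennreal (1/(2*\<epsilon>)) * ennreal ((gb x - g0 x)\<^sup>2 / g0 x)"
      using * by (cases "x \<in> B") auto
  qed
  also have "\<dots> = (\<integral>\<^sup>+x. ennreal (g0 x) * indicator B x \<partial>Qm p N) + ennreal (\<epsilon>/2) * 1 + ennreal (1/(2*\<epsilon>)) * X"
    unfolding X_def by (simp add: nn_integral_add nn_integral_cmult I0)
  also have "\<dots> \<le> (\<integral>\<^sup>+x. ennreal (g0 x) * indicator B x \<partial>Qm p N) + ennreal (\<epsilon>/2) + ennreal (1/(2*\<epsilon>)) * ennreal (\<epsilon>\<^sup>2)"
    using Xle by (simp add: add_left_mono mult_left_mono)
  also have "\<dots> = (\<integral>\<^sup>+x. ennreal (g0 x) * indicator B x \<partial>Qm p N) + ennreal \<epsilon>"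
  proof -
    have "ennreal (\<epsilon>/2) + ennreal (1/(2*\<epsilon>)) * ennreal (\<epsilon>\<^sup>2) = ennreal \<epsilon>"
      using e by (simp add: ennreal_mult[symmetric] ennreal_plus[symmetric] power2_eq_square del: ennreal_plus)
    then show ?thesis by (simp add: add.assoc)
  qed
  finally have main: "(\<integral>\<^sup>+x. ennreal (gb x) * indicator B x \<partial>Qm p N) \<le> (\<integral>\<^sup>+x. ennreal (g0 x) * indicator B x \<partial>Qm p N) + ennreal \<epsilon>" .
  have "(\<integral>\<^sup>+x. ennreal (gb x) * indicator B x \<partial>Qm p N)
      = (\<integral>\<^sup>+x. ennreal (1/n) * (\<Sum>g\<in>G. ennreal (Gd p \<sigma> (\<theta> g) N x) * indicator B x) \<partial>Qm p N)"
  proof (rule nn_integral_cong)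
    fix x
    have sn: "0 \<le> (\<Sum>g\<in>G. Gd p \<sigma> (\<theta> g) N x)" using Gd_pos[OF s] by (simp add: sum_nonneg less_imp_le)
    have "(\<Sum>g\<in>G. ennreal (Gd p \<sigma> (\<theta> g) N x) * indicator B x) = (\<Sum>g\<in>G. ennreal (Gd p \<sigma> (\<theta> g) N x)) * indicator B x"
      by (simp add: sum_distrib_right)
    also have "\<dots> = ennreal (\<Sum>g\<in>G. Gd p \<sigma> (\<theta> g) N x) * indicator B x"
      using Gd_pos[OF s] by (simp add: sum_ennreal less_imp_le)
    finally have *: "(\<Sum>g\<in>G. ennreal (Gd p \<sigma> (\<theta> g) N x) * indicator B x) = ennreal (\<Sum>g\<in>G. Gd p \<sigma> (\<theta> g) N x) * indicator B x" .
    have "ennreal (gb x) = ennreal (1/n) * ennreal (\<Sum>g\<in>G. Gd p \<sigma> (\<theta> g) N x)"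
      unfolding gb_def using n sn by (simp add: ennreal_mult[symmetric])
    then show "ennreal (gb x) * indicator B x = ennreal (1/n) * (\<Sum>g\<in>G. ennreal (Gd p \<sigma> (\<theta> g) N x) * indicator B x)"
      unfolding * by (simp add: mult.assoc)
  qed
  also have "\<dots> = ennreal (1/n) * (\<Sum>g\<in>G. \<integral>\<^sup>+x. ennreal (Gd p \<sigma> (\<theta> g) N x) * indicator B x \<partial>Qm p N)"
    by (simp add: nn_integral_cmult nn_integral_sum)
  finally show ?thesis using main by (simp add: n_def g0_def)
qed



definition Gs :: "nat \<Rightarrow> nat \<Rightarrow> (nat \<Rightarrow> nat \<times> real) set" where
  "Gs k m = PiE {..<k} (\<lambda>_. {..<m} \<times> {-1, 1})"

definition mu :: "nat \<Rightarrow> nat \<Rightarrow> real \<Rightarrow> (nat \<Rightarrow> nat \<times> real) \<Rightarrow> nat \<Rightarrow> real" where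
  "mu k m a g j = (if j < k * m \<and> fst (g (j div m)) = j mod m then a * snd (g (j div m)) else 0)"

lemma sum_block:
  fixes f :: "nat \<Rightarrow> real"
  shows "(\<Sum>j<k*m. f j) = (\<Sum>b<k. \<Sum>w<m. f (b*m + w))"
proof (induction k)
  case 0 then show ?case by simp
next
  case (Suc k)
  have "{..<Suc k * m} = {..<k*m} \<union> {k*m..<k*m+m}" by auto
  then have "(\<Sum>j<Suc k*m. f j) = (\<Sum>j<k*m. f j) + (\<Sum>j\<in>{k*m..<k*m+m}. f j)"
    by (simp add: sum.union_disjoint ivl_disj_int)
  also have "(\<Sum>j\<in>{k*m..<k*m+m}. f j) = (\<Sum>w<m. f (k*m + w))"
    using sum.shift_bounds_nat_ivl[of f 0 "k*m" m] by (simp add: lessThan_atLeast0 add.commute)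
  finally show ?case using Suc by simp
qed

lemma mu_block:
  assumes "b < k" "w < m"
  shows "mu k m a g (b*m + w) = (if fst (g b) = w then a * snd (g b) else 0)"
proof -
  have m: "m > 0" using assms by simp
  have "(b*m + w) div m = b" using assms by simp
  moreover have "(b*m + w) mod m = w" using assms by simp
  moreover have "b*m + w < k*m"
  proof -
    have "b*m + w < b*m + m" using assms by simp
    also have "\<dots> = Suc b * m" by simp
    also have "\<dots> \<le> k * m" using assms by (intro mult_right_mono) auto
    finally show ?thesis .
  qed
  ultimately show ?thesis unfolding mu_def by simp
qed

lemma mu_zero: "j \<ge> k * m \<Longrightarrow> mu k m a g j = 0"
  unfolding mu_def by simp

lemma inner_mu:
  assumes g: "g \<in> Gs k m" and g': "g' \<in> Gs k m" and km: "k * m \<le> p"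
  shows "(\<Sum>j<p. mu k m a g j * mu k m a g' j)
       = a\<^sup>2 * (\<Sum>b<k. if fst (g b) = fst (g' b) then snd (g b) * snd (g' b) else 0)"
proof -
  have "(\<Sum>j<p. mu k m a g j * mu k m a g' j) = (\<Sum>j<k*m. mu k m a g j * mu k m a g' j)"
  proof (rule sum.mono_neutral_right)
    show "\<forall>i\<in>{..<p} - {..<k * m}. mu k m a g i * mu k m a g' i = 0" by (auto simp: mu_zero)
  qed (use km in auto)
  also have "\<dots> = (\<Sum>b<k. \<Sum>w<m. mu k m a g (b*m+w) * mu k m a g' (b*m+w))"
    by (rule sum_block)
  also have "\<dots> = (\<Sum>b<k. a\<^sup>2 * (if fst (g b) = fst (g' b) then snd (g b) * snd (g' b) else 0))"
  proof (rule sum.cong[OF refl])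
    fix b assume b: "b \<in> {..<k}"
    have fb: "fst (g b) < m" using g b by (auto simp: Gs_def PiE_def Pi_def)
    have "(\<Sum>w<m. mu k m a g (b*m+w) * mu k m a g' (b*m+w))
        = (\<Sum>w<m. if w = fst (g b) then (if fst (g' b) = w then a * snd (g b) * (a * snd (g' b)) else 0) else 0)"
      using b by (intro sum.cong refl) (auto simp: mu_block)
    also have "\<dots> = (if fst (g' b) = fst (g b) then a * snd (g b) * (a * snd (g' b)) else 0)"
      using fb by (simp add: sum.delta')
    finally show "(\<Sum>w<m. mu k m a g (b*m+w) * mu k m a g' (b*m+w))
        = a\<^sup>2 * (if fst (g b) = fst (g' b) then snd (g b) * snd (g' b) else 0)"
      by (auto simp: power2_eq_square)
  qed
  also have "\<dots> = a\<^sup>2 * (\<Sum>b<k. if fst (g b) = fst (g' b) then snd (g b) * snd (g' b) else 0)"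
    by (simp add: sum_distrib_left)
  finally show ?thesis .
qed

lemma l2_mu:
  assumes g: "g \<in> Gs k m" and km: "k * m \<le> p"
  shows "(\<Sum>j<p. (mu k m a g j)\<^sup>2) = a\<^sup>2 * real k"
proof -
  have "(\<Sum>j<p. (mu k m a g j)\<^sup>2) = (\<Sum>j<p. mu k m a g j * mu k m a g j)"
    by (simp add: power2_eq_square)
  also have "\<dots> = a\<^sup>2 * (\<Sum>b<k. snd (g b) * snd (g b))"
    using inner_mu[OF g g km] by simp
  also have "(\<Sum>b<k. snd (g b) * snd (g b)) = (\<Sum>b<k. (1::real))"
    using g by (intro sum.cong refl) (auto simp: Gs_def PiE_def Pi_def)
  finally show ?thesis by simp
qed

lemma l0_mu:
  assumes g: "g \<in> Gs k m"
  shows "card {j. j < p \<and> mu k m a g j \<noteq> 0} \<le> k"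
proof -
  have "{j. j < p \<and> mu k m a g j \<noteq> 0} \<subseteq> (\<lambda>b. b * m + fst (g b)) ` {..<k}"
  proof
    fix j assume "j \<in> {j. j < p \<and> mu k m a g j \<noteq> 0}"
    then have j: "j < k * m" "fst (g (j div m)) = j mod m" unfolding mu_def by (auto split: if_splits)
    have "j div m < k" using j(1) by (simp add: div_less_iff_less_mult mult.commute less_mult_imp_div_less)
    moreover have "j = (j div m) * m + fst (g (j div m))" using j(2) by simp
    ultimately show "j \<in> (\<lambda>b. b * m + fst (g b)) ` {..<k}" by blast
  qed
  then have "card {j. j < p \<and> mu k m a g j \<noteq> 0} \<le> card ((\<lambda>b. b * m + fst (g b)) ` {..<k})"
    by (intro card_mono) auto
  also have "\<dots> \<le> card {..<k}" by (rule card_image_le) simp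
  finally show ?thesis by simp
qed



definition Xf :: "nat \<times> real \<Rightarrow> nat \<times> real \<Rightarrow> real" where
  "Xf y y' = (if fst y = fst y' then snd y * snd y' else 0)"

lemma sum_pairs:
  fixes F :: "nat \<times> real \<Rightarrow> nat \<times> real \<Rightarrow> real"
  shows "(\<Sum>g\<in>Gs k m. \<Sum>g'\<in>Gs k m. \<Prod>b<k. F (g b) (g' b))
       = (\<Sum>y\<in>{..<m} \<times> {-1,1}. \<Sum>y'\<in>{..<m} \<times> {-1,1}. F y y') ^ k"
proof -
  have "(\<Sum>g\<in>Gs k m. \<Sum>g'\<in>Gs k m. \<Prod>b<k. F (g b) (g' b))
      = (\<Sum>g\<in>Gs k m. \<Prod>b<k. \<Sum>y'\<in>{..<m} \<times> {-1,1}. F (g b) y')"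
  proof (rule sum.cong[OF refl])
    fix g
    show "(\<Sum>g'\<in>Gs k m. \<Prod>b<k. F (g b) (g' b)) = (\<Prod>b<k. \<Sum>y'\<in>{..<m} \<times> {-1,1}. F (g b) y')"
      unfolding Gs_def
      using prod_sum_PiE[of "{..<k}" "\<lambda>_. {..<m} \<times> {-1,1::real}" "\<lambda>b y'. F (g b) y'"] by simp
  qed
  also have "\<dots> = (\<Prod>b<k. \<Sum>y\<in>{..<m} \<times> {-1,1}. \<Sum>y'\<in>{..<m} \<times> {-1,1}. F y y')"
    unfolding Gs_def
    using prod_sum_PiE[of "{..<k}" "\<lambda>_. {..<m} \<times> {-1,1::real}" "\<lambda>b y. \<Sum>y'\<in>{..<m} \<times> {-1,1}. F y y'"] by simp
  finally show ?thesis by simp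
qed

lemma sumY:
  assumes m: "m > 0"
  shows "(\<Sum>y\<in>{..<m} \<times> {-1,1::real}. \<Sum>y'\<in>{..<m} \<times> {-1,1::real}. exp (t * Xf y y'))
       = 2 * real m * (exp t + exp (-t) + 2 * (real m - 1))"
proof -
  have inner: "(\<Sum>y'\<in>{..<m} \<times> {-1,1::real}. exp (t * Xf y y')) = exp t + exp (-t) + 2 * (real m - 1)"
    if y: "y \<in> {..<m} \<times> {-1,1::real}" for y
  proof -
    obtain u s where us: "y = (u, s)" "u < m" "s = -1 \<or> s = 1" using y by auto
    have "(\<Sum>y'\<in>{..<m} \<times> {-1,1::real}. exp (t * Xf y y'))
        = (\<Sum>u'<m. \<Sum>s'\<in>{-1,1::real}. exp (t * Xf (u, s) (u', s')))"
      unfolding us(1) by (subst sum.cartesian_product) (simp add: case_prod_beta)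
    also have "\<dots> = (\<Sum>u'<m. 2 + (if u' = u then exp t + exp (-t) - 2 else 0))"
      using us(3) by (intro sum.cong refl) (auto simp: Xf_def)
    also have "\<dots> = 2 * real m + (exp t + exp (-t) - 2)"
      using us(2) by (simp add: sum.distrib sum.delta)
    finally show ?thesis by (simp add: algebra_simps)
  qed
  have "(\<Sum>y\<in>{..<m} \<times> {-1,1::real}. \<Sum>y'\<in>{..<m} \<times> {-1,1::real}. exp (t * Xf y y'))
      = (\<Sum>y\<in>{..<m} \<times> {-1,1::real}. exp t + exp (-t) + 2 * (real m - 1))"
    by (rule sum.cong[OF refl]) (rule inner)
  also have "\<dots> = 2 * real m * (exp t + exp (-t) + 2 * (real m - 1))"
    by (simp add: card_cartesian_product)
  finally show ?thesis .
qed

definition thetaR :: "nat set \<Rightarrow> (nat \<Rightarrow> real) \<Rightarrow> nat \<Rightarrow> nat \<Rightarrow> real" where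
  "thetaR R v = (\<lambda>i. if i \<in> R then v else (\<lambda>j. 0))"

lemma prod_thetaR:
  "(\<Prod>i\<in>{1..N}. \<Prod>j<p. exp (thetaR R v i j * thetaR R v' i j / \<sigma>\<^sup>2))
     = exp (real (card ({1..N} \<inter> R)) * (\<Sum>j<p. v j * v' j) / \<sigma>\<^sup>2)"
proof -
  have "(\<Prod>i\<in>{1..N}. \<Prod>j<p. exp (thetaR R v i j * thetaR R v' i j / \<sigma>\<^sup>2))
      = (\<Prod>i\<in>{1..N}. if i \<in> R then exp ((\<Sum>j<p. v j * v' j) / \<sigma>\<^sup>2) else 1)"
    by (intro prod.cong refl) (simp add: thetaR_def exp_sum[symmetric] sum_divide_distrib)
  also have "\<dots> = exp ((\<Sum>j<p. v j * v' j) / \<sigma>\<^sup>2) ^ card ({1..N} \<inter> R)"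
    by (simp add: prod.If_cases Int_def)
  also have "\<dots> = exp (real (card ({1..N} \<inter> R)) * (\<Sum>j<p. v j * v' j) / \<sigma>\<^sup>2)"
    by (simp add: exp_of_nat_mult[symmetric])
  finally show ?thesis .
qed

lemma chi_sum:
  assumes m: "m > 0" and km: "k * m \<le> p" and that: "t = real (card ({1..N} \<inter> R)) * a\<^sup>2 / \<sigma>\<^sup>2"
  shows "(\<Sum>g\<in>Gs k m. \<Sum>g'\<in>Gs k m. \<Prod>i\<in>{1..N}. \<Prod>j<p.
            exp (thetaR R (mu k m a g) i j * thetaR R (mu k m a g') i j / \<sigma>\<^sup>2))
       = (2 * real m * (exp t + exp (-t) + 2 * (real m - 1))) ^ k"
proof -
  have "(\<Sum>g\<in>Gs k m. \<Sum>g'\<in>Gs k m. \<Prod>i\<in>{1..N}. \<Prod>j<p.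
            exp (thetaR R (mu k m a g) i j * thetaR R (mu k m a g') i j / \<sigma>\<^sup>2))
      = (\<Sum>g\<in>Gs k m. \<Sum>g'\<in>Gs k m. \<Prod>b<k. exp (t * Xf (g b) (g' b)))"
  proof (intro sum.cong refl)
    fix g g' assume g: "g \<in> Gs k m" and g': "g' \<in> Gs k m"
    have "(\<Prod>i\<in>{1..N}. \<Prod>j<p. exp (thetaR R (mu k m a g) i j * thetaR R (mu k m a g') i j / \<sigma>\<^sup>2))
        = exp (real (card ({1..N} \<inter> R)) * (a\<^sup>2 * (\<Sum>b<k. Xf (g b) (g' b))) / \<sigma>\<^sup>2)"
      by (subst prod_thetaR) (simp add: inner_mu[OF g g' km] Xf_def)
    also have "\<dots> = exp (t * (\<Sum>b<k. Xf (g b) (g' b)))"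
      using that by (simp add: field_simps)
    also have "\<dots> = exp (\<Sum>b<k. t * Xf (g b) (g' b))"
      by (simp add: sum_distrib_left)
    also have "\<dots> = (\<Prod>b<k. exp (t * Xf (g b) (g' b)))" by (simp add: exp_sum)
    finally show "(\<Prod>i\<in>{1..N}. \<Prod>j<p. exp (thetaR R (mu k m a g) i j * thetaR R (mu k m a g') i j / \<sigma>\<^sup>2))
        = (\<Prod>b<k. exp (t * Xf (g b) (g' b)))" .
  qed
  also have "\<dots> = (2 * real m * (exp t + exp (-t) + 2 * (real m - 1))) ^ k"
    by (subst sum_pairs[of "\<lambda>y y'. exp (t * Xf y y')"]) (simp only: sumY[OF m])
  finally show ?thesis .
qed

lemma card_Gs: "card (Gs k m) = (2 * m) ^ k"
  unfolding Gs_def by (simp add: card_PiE card_cartesian_product mult_2[symmetric] power_mult_distrib)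



lemma cosh_bound:
  fixes t :: real assumes t: "t \<ge> 0"
  shows "exp t + exp (-t) - 2 \<le> t\<^sup>2 * exp t"
proof -
  define A where "A = exp (t/2)"
  have Ap: "A > 0" unfolding A_def by simp
  have A2: "exp t = A\<^sup>2" unfolding A_def by (simp add: power2_eq_square exp_add[symmetric])
  have Am: "exp (-t) = 1 / A\<^sup>2" using A2 by (simp add: exp_minus inverse_eq_divide)
  have sq: "exp t + exp (-t) - 2 = (A - 1/A)\<^sup>2"
    using Ap by (simp add: A2 Am power2_eq_square field_simps)
  have d: "A - 1/A = A * (1 - exp (-t))"
    using Ap by (simp add: Am field_simps power2_eq_square)
  have e1: "1 - exp (-t) \<le> t" using exp_ge_add_one_self[of "-t"] by simp
  have e0: "0 \<le> 1 - exp (-t)" using t by simp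
  have "A - 1/A \<le> A * t" unfolding d using Ap e1 by (simp add: mult_left_mono)
  moreover have "0 \<le> A - 1/A" unfolding d using Ap e0 by simp
  ultimately have "(A - 1/A)\<^sup>2 \<le> (A * t)\<^sup>2" by (rule power_mono)
  then show ?thesis unfolding sq by (simp add: power_mult_distrib A2 mult.commute)
qed

lemma L2_bound:
  fixes L :: real assumes "L \<ge> 0"
  shows "L\<^sup>2 * exp (- L / 2) \<le> 8"
proof -
  have "1 + L/2 + (L/2)\<^sup>2/2 \<le> exp (L/2)" by (rule exp_lower_Taylor_quadratic) (use assms in simp)
  then have "L\<^sup>2 / 8 \<le> exp (L/2)" using assms by (simp add: power2_eq_square field_simps)
  then have "L\<^sup>2 \<le> 8 * exp (L/2)" by simp
  then have "L\<^sup>2 * exp (- L / 2) \<le> 8 * exp (L/2) * exp (- L/2)" by (simp add: mult_right_mono)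
  also have "\<dots> = 8" by (simp add: mult.assoc exp_add[symmetric])
  finally show ?thesis .
qed

lemma num_bound:
  fixes w \<epsilon> :: real and k p :: nat
  assumes k: "1 \<le> k" "k \<le> p" and w: "0 \<le> w" "w \<le> (\<epsilon>/7) * vkp k p" and e: "0 < \<epsilon>" "\<epsilon> < 1"
  shows "w\<^sup>2 * exp (w / k) / p \<le> \<epsilon>\<^sup>2 / 2"
proof -
  define c where "c = \<epsilon>/7"
  have c: "0 < c" "c \<le> 1/7" using e by (auto simp: c_def)
  have pp: "real p > 0" using k by simp
  have kp: "real k > 0" using k by simp
  show ?thesis
  proof (cases "real k > sqrt (real p)")
    case True
    then have v: "vkp k p = sqrt p" by (simp add: vkp_def)
    have w1: "w \<le> c * sqrt p" using w v by (simp add: c_def)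
    have "w / k \<le> c * sqrt p / k" using w1 kp by (simp add: divide_right_mono)
    also have "\<dots> \<le> c * 1" using True c kp by (simp add: field_simps)
    finally have "w / k \<le> 1" using c by simp
    then have ex: "exp (w / k) \<le> 3" using exp_le by (meson exp_le_cancel_iff order.trans)
    have "w\<^sup>2 \<le> (c * sqrt p)\<^sup>2" using w w1 by (intro power_mono) auto
    then have w2: "w\<^sup>2 \<le> c\<^sup>2 * p" by (simp add: power_mult_distrib)
    have "w\<^sup>2 * exp (w / k) \<le> (c\<^sup>2 * p) * 3" using w2 ex by (intro mult_mono) auto
    then have "w\<^sup>2 * exp (w / k) / p \<le> 3 * c\<^sup>2" using pp by (simp add: field_simps)
    also have "\<dots> \<le> \<epsilon>\<^sup>2 / 2" unfolding c_def by (simp add: power2_eq_square field_simps)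
    finally show ?thesis .
  next
    case False
    define L where "L = ln (exp 1 * real p / (real k)\<^sup>2)"
    have v: "vkp k p = k * L" using False by (simp add: vkp_def L_def)
    have "real k \<le> sqrt p" using False by simp
    then have "(real k)\<^sup>2 \<le> (sqrt p)\<^sup>2" by (rule power_mono) simp
    then have kk: "(real k)\<^sup>2 \<le> p" by simp
    have pos: "exp 1 * real p / (real k)\<^sup>2 > 0" using pp kp by simp
    have eL: "exp L = exp 1 * real p / (real k)\<^sup>2" unfolding L_def using pos by simp
    have L1: "L \<ge> 1"
    proof -
      have "exp 1 \<le> exp 1 * real p / (real k)\<^sup>2" using kk kp by (simp add: field_simps)
      then show ?thesis unfolding L_def using pos by (simp add: ln_ge_iff)
    qed
    have w1: "w \<le> c * k * L" using w v by (simp add: c_def)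
    have wk: "w / k \<le> c * L" using w1 kp by (simp add: field_simps)
    have "w\<^sup>2 \<le> (c * k * L)\<^sup>2" using w w1 by (intro power_mono) auto
    then have "w\<^sup>2 * exp (w / k) \<le> (c * k * L)\<^sup>2 * exp (c * L)"
      using wk by (intro mult_mono) auto
    then have "w\<^sup>2 * exp (w / k) / p \<le> (c * k * L)\<^sup>2 * exp (c * L) / p"
      using pp by (simp add: divide_right_mono)
    also have "\<dots> = exp 1 * c\<^sup>2 * L\<^sup>2 * (exp (c * L) / exp L)"
      using pp kp unfolding eL by (simp add: field_simps power_mult_distrib)
    also have "\<dots> = exp 1 * c\<^sup>2 * (L\<^sup>2 * exp (c * L - L))"
      by (simp add: exp_diff)
    also have "\<dots> \<le> exp 1 * c\<^sup>2 * (L\<^sup>2 * exp (- L / 2))"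
    proof -
      have "c * L - L \<le> - L / 2" using c L1 by (simp add: field_simps)
      then show ?thesis by (intro mult_left_mono) auto
    qed
    also have "\<dots> \<le> 3 * c\<^sup>2 * 8"
      using L2_bound[of L] L1 exp_le by (intro mult_mono) auto
    also have "\<dots> \<le> \<epsilon>\<^sup>2 / 2" unfolding c_def by (simp add: power2_eq_square field_simps)
    finally show ?thesis .
  qed
qed

lemma chi_final:
  fixes \<epsilon> t :: real and k m :: nat
  assumes m: "m > 0" and k: "k \<ge> 1" and t: "t \<ge> 0"
    and q: "real k * (t\<^sup>2 * exp t) / (2 * real m) \<le> \<epsilon>\<^sup>2 / 2" and e: "0 < \<epsilon>" "\<epsilon> < 1"
  shows "(2 * real m * (exp t + exp (-t) + 2 * (real m - 1))) ^ k \<le> (1 + \<epsilon>\<^sup>2) * (real ((2 * m) ^ k))\<^sup>2"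
proof -
  define q where "q = (exp t + exp (-t) - 2) / (2 * real m)"
  have mp: "real m > 0" using m by simp
  have q0: "q \<ge> 0"
  proof -
    have a1: "1 + t \<le> exp t" by (rule exp_ge_add_one_self)
    have a2: "1 + -t \<le> exp (-t)" by (rule exp_ge_add_one_self)
    have "exp t + exp (-t) - 2 \<ge> 0" using a1 a2 by linarith
    then show ?thesis unfolding q_def using mp by simp
  qed
  have kq: "real k * q \<le> \<epsilon>\<^sup>2 / 2"
  proof -
    have "real k * q \<le> real k * (t\<^sup>2 * exp t) / (2 * real m)"
      unfolding q_def using cosh_bound[OF t] mp by (simp add: divide_right_mono mult_left_mono)
    then show ?thesis using q by linarith
  qed
  have eq: "2 * real m * (exp t + exp (-t) + 2 * (real m - 1)) = (2 * real m)\<^sup>2 * (1 + q)"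
    unfolding q_def using mp by (simp add: field_simps power2_eq_square)
  have e2: "\<epsilon>\<^sup>2 \<le> 1" using e by (intro power_le_one) auto
  have "(1 + q) ^ k \<le> exp q ^ k"
    using q0 by (intro power_mono) (auto simp: exp_ge_add_one_self)
  also have "\<dots> = exp (real k * q)" by (simp add: exp_of_nat_mult)
  also have "\<dots> \<le> 1 + real k * q + (real k * q)\<^sup>2"
  proof (rule exp_bound)
    show "0 \<le> real k * q" using q0 by simp
    show "real k * q \<le> 1" using kq e2 by linarith
  qed
  also have "\<dots> \<le> 1 + \<epsilon>\<^sup>2"
  proof -
    have kq1: "real k * q \<le> 1" using kq e2 by linarith
    have kq0: "0 \<le> real k * q" using q0 by simp
    have "(real k * q)\<^sup>2 \<le> real k * q"
      using kq1 kq0 unfolding power2_eq_square by (rule mult_left_le)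
    then show ?thesis using kq by simp
  qed
  finally have b: "(1 + q) ^ k \<le> 1 + \<epsilon>\<^sup>2" .
  have "(2 * real m * (exp t + exp (-t) + 2 * (real m - 1))) ^ k = ((2 * real m) ^ k)\<^sup>2 * (1 + q) ^ k"
  proof -
    have "((2 * real m)\<^sup>2) ^ k = ((2 * real m) ^ k)\<^sup>2" by (metis power_mult mult.commute)
    then show ?thesis unfolding eq power_mult_distrib by simp
  qed
  also have "\<dots> \<le> ((2 * real m) ^ k)\<^sup>2 * (1 + \<epsilon>\<^sup>2)"
    using b by (intro mult_left_mono) auto
  finally show ?thesis by (simp add: mult.commute)
qed



abbreviation bor :: "nat \<Rightarrow> nat \<Rightarrow> (nat \<Rightarrow> real) measure" where
  "bor p \<equiv> (\<lambda>i. PiM {..<p} (\<lambda>j. (borel :: real measure)))"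

lemma obs_law_eq: "obs_law p \<sigma> \<theta> = PiM {1..} (compM p \<sigma> \<theta>)"
  unfolding obs_law_def compM_def by (rule refl)

lemma sets_compM: "sets (compM p \<sigma> \<theta> i) = sets (bor p i)"
  unfolding compM_def by (rule sets_PiM_cong) auto

lemma space_compM: "space (compM p \<sigma> \<theta> i) = space (bor p i)"
  unfolding compM_def by (simp add: space_PiM)

lemma sets_PN: "sets (PiM I (compM p \<sigma> \<theta>)) = sets (PiM I (bor p))"
  by (rule sets_PiM_cong) (auto simp: sets_compM)

lemma sets_Qm: "sets (Qm p N) = sets (PiM {1..N} (bor p))"
  unfolding Qm_def by (rule sets_PiM_cong) (auto intro!: sets_PiM_cong)

lemma space_obs_law: "space (obs_law p \<sigma> \<theta>) = space (obs_space p)"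
  unfolding obs_law_def obs_space_def by (simp add: space_PiM)

lemma pps: "\<sigma> > 0 \<Longrightarrow> product_prob_space (compM p \<sigma> \<theta>)"
  by (simp add: product_prob_space_def product_prob_space_axioms_def product_sigma_finite_def
        prob_space_compM prob_space_imp_sigma_finite)

lemma prob_obs_law: "\<sigma> > 0 \<Longrightarrow> prob_space (obs_law p \<sigma> \<theta>)"
proof -
  assume s: "\<sigma> > 0"
  interpret product_prob_space "compM p \<sigma> \<theta>" "{1..}" using pps[OF s] by (simp add: product_prob_space_def)
  show ?thesis unfolding obs_law_eq by (rule P.prob_space_axioms)
qed

lemma stop_sets:
  assumes T: "ext_stopping_time p T"
  shows "\<exists>A \<in> sets (PiM {1..t} (bor p)). {\<omega>\<in>space (obs_space p). T \<omega> = enat t}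
            = (\<lambda>\<omega>. restrict \<omega> {1..t}) -` A \<inter> space (obs_space p)"
proof -
  have mem: "{\<omega>\<in>space (obs_space p). T \<omega> = enat t} \<in> sets (obs_sigma p t)"
    using T unfolding ext_stopping_time_def by blast
  have fs: "(\<lambda>\<omega>. restrict \<omega> {1..t}) \<in> space (obs_space p) \<rightarrow> space (PiM {1..t} (bor p))"
  proof (rule Pi_I)
    fix \<omega> assume "\<omega> \<in> space (obs_space p)"
    then have w: "\<omega> \<in> PiE {1..} (\<lambda>i. space (bor p i))" unfolding obs_space_def by (rule back_subst) (rule space_PiM)
    have "restrict \<omega> {1..t} \<in> PiE {1..t} (\<lambda>i. space (bor p i))"
      unfolding restrict_PiE_iff using PiE_mem[OF w] by auto
    then show "restrict \<omega> {1..t} \<in> space (PiM {1..t} (bor p))" by (subst space_PiM)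
  qed
  show ?thesis using mem unfolding obs_sigma_def sets_vimage_algebra2[OF fs] by blast
qed

lemma event_set:
  assumes T: "ext_stopping_time p T" and s: "\<sigma> > 0"
  shows "\<exists>B \<in> sets (PiM {1..N} (bor p)). \<forall>\<theta>.
     emeasure (obs_law p \<sigma> \<theta>) {\<omega>\<in>space (obs_law p \<sigma> \<theta>). T \<omega> \<le> enat N}
       = emeasure (PiM {1..N} (compM p \<sigma> \<theta>)) B
     \<and> {\<omega>\<in>space (obs_law p \<sigma> \<theta>). T \<omega> \<le> enat N} \<in> sets (obs_law p \<sigma> \<theta>)"
proof -
  define \<Omega> where "\<Omega> = space (obs_space p)"
  define A where "A t = (SOME A. A \<in> sets (PiM {1..t} (bor p)) \<and> {\<omega>\<in>\<Omega>. T \<omega> = enat t}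
            = (\<lambda>\<omega>. restrict \<omega> {1..t}) -` A \<inter> \<Omega>)" for t
  have A: "A t \<in> sets (PiM {1..t} (bor p))" "{\<omega>\<in>\<Omega>. T \<omega> = enat t} = (\<lambda>\<omega>. restrict \<omega> {1..t}) -` A t \<inter> \<Omega>" for t
    using someI_ex[OF stop_sets[OF T, of t, unfolded Bex_def]] unfolding A_def \<Omega>_def by auto
  define B where "B = (\<Union>t\<in>{..N}. (\<lambda>x. restrict x {1..t}) -` A t \<inter> space (PiM {1..N} (bor p)))"
  have B: "B \<in> sets (PiM {1..N} (bor p))"
    unfolding B_def
  proof (intro sets.finite_UN ballI)
    fix t assume "t \<in> {..N}"
    then have "(\<lambda>x. restrict x {1..t}) \<in> measurable (PiM {1..N} (bor p)) (PiM {1..t} (bor p))"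
      by (intro measurable_restrict_subset) auto
    then show "(\<lambda>x. restrict x {1..t}) -` A t \<inter> space (PiM {1..N} (bor p)) \<in> sets (PiM {1..N} (bor p))"
      using A(1) by (rule measurable_sets)
  qed simp
  have ev: "{\<omega>\<in>\<Omega>. T \<omega> \<le> enat N} = (\<lambda>\<omega>. restrict \<omega> {1..N}) -` B \<inter> \<Omega>"
  proof (intro set_eqI iffI)
    fix \<omega> assume "\<omega> \<in> {\<omega>\<in>\<Omega>. T \<omega> \<le> enat N}"
    then have w: "\<omega> \<in> \<Omega>" "T \<omega> \<le> enat N" by auto
    then obtain t where t: "T \<omega> = enat t" "t \<le> N" by (cases "T \<omega>") auto
    then have "\<omega> \<in> (\<lambda>\<omega>. restrict \<omega> {1..t}) -` A t \<inter> \<Omega>" using A(2)[of t] w by blast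
    moreover have "restrict (restrict \<omega> {1..N}) {1..t} = restrict \<omega> {1..t}" using t by auto
    moreover have "restrict \<omega> {1..N} \<in> space (PiM {1..N} (bor p))"
      using w unfolding \<Omega>_def obs_space_def by (auto simp: space_PiM)
    ultimately show "\<omega> \<in> (\<lambda>\<omega>. restrict \<omega> {1..N}) -` B \<inter> \<Omega>"
      unfolding B_def using w t by auto
  next
    fix \<omega> assume "\<omega> \<in> (\<lambda>\<omega>. restrict \<omega> {1..N}) -` B \<inter> \<Omega>"
    then obtain t where t: "t \<le> N" "restrict (restrict \<omega> {1..N}) {1..t} \<in> A t" and w: "\<omega> \<in> \<Omega>"
      unfolding B_def by auto
    have "restrict (restrict \<omega> {1..N}) {1..t} = restrict \<omega> {1..t}" using t by auto
    then have "\<omega> \<in> {\<omega>\<in>\<Omega>. T \<omega> = enat t}" using A(2)[of t] t w by auto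
    then show "\<omega> \<in> {\<omega>\<in>\<Omega>. T \<omega> \<le> enat N}" using t by auto
  qed
  show ?thesis
  proof (intro bexI[OF _ B] allI conjI)
    fix \<theta>
    interpret product_prob_space "compM p \<sigma> \<theta>" "{1..}" using pps[OF s] by (simp add: product_prob_space_def)
    have BN: "B \<in> sets (PiM {1..N} (compM p \<sigma> \<theta>))" using B by (simp add: sets_PN)
    have sp: "space (obs_law p \<sigma> \<theta>) = \<Omega>" unfolding \<Omega>_def by (rule space_obs_law)
    have "prod_emb {1..} (compM p \<sigma> \<theta>) {1..N} B = (\<lambda>\<omega>. restrict \<omega> {1..N}) -` B \<inter> \<Omega>"
      unfolding prod_emb_def \<Omega>_def obs_space_def by (simp add: space_compM space_PiM)
    then have pe: "prod_emb {1..} (compM p \<sigma> \<theta>) {1..N} B = {\<omega>\<in>space (obs_law p \<sigma> \<theta>). T \<omega> \<le> enat N}"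
      using ev sp by simp
    show "emeasure (obs_law p \<sigma> \<theta>) {\<omega>\<in>space (obs_law p \<sigma> \<theta>). T \<omega> \<le> enat N}
       = emeasure (PiM {1..N} (compM p \<sigma> \<theta>)) B"
    proof -
      have e1: "emeasure (obs_law p \<sigma> \<theta>) (prod_emb {1..} (compM p \<sigma> \<theta>) {1..N} B) = emeasure (PiM {1..N} (compM p \<sigma> \<theta>)) B"
        unfolding obs_law_eq by (rule emeasure_PiM_emb') (use BN in auto)
      then show ?thesis unfolding pe .
    qed
    have "prod_emb {1..} (compM p \<sigma> \<theta>) {1..N} B \<in> sets (PiM {1..} (compM p \<sigma> \<theta>))"
      using measurable_sets[OF measurable_restrict_subset[of "{1..N}" "{1..}" "compM p \<sigma> \<theta>"] BN]
      by (simp add: prod_emb_def space_PiM)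
    then show "{\<omega>\<in>space (obs_law p \<sigma> \<theta>). T \<omega> \<le> enat N} \<in> sets (obs_law p \<sigma> \<theta>)"
      unfolding pe obs_law_eq .
  qed
qed



lemma avg_exists:
  fixes f :: "'a \<Rightarrow> real"
  assumes "finite G" "G \<noteq> {}" "(1 / real (card G)) * (\<Sum>g\<in>G. f g) \<le> b"
  shows "\<exists>g\<in>G. f g \<le> b"
proof (rule ccontr)
  assume "\<not> (\<exists>g\<in>G. f g \<le> b)"
  then have lt: "\<And>g. g \<in> G \<Longrightarrow> b < f g" by auto
  have "(\<Sum>g\<in>G. b) < (\<Sum>g\<in>G. f g)" using assms(1,2) lt by (rule sum_strict_mono)
  then have "real (card G) * b < (\<Sum>g\<in>G. f g)" by simp
  moreover have "card G > 0" using assms(1,2) by (simp add: card_gt_0_iff)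
  ultimately have "b < (1 / real (card G)) * (\<Sum>g\<in>G. f g)" by (simp add: field_simps)
  then show False using assms(3) by simp
qed

lemma emeasure_T_le:
  assumes s: "\<sigma> > 0" and T: "ext_stopping_time p T" and B: "B \<in> sets (PiM {1..N} (bor p))"
    and eq: "emeasure (obs_law p \<sigma> \<theta>) {\<omega>\<in>space (obs_law p \<sigma> \<theta>). T \<omega> \<le> enat N} = emeasure (PiM {1..N} (compM p \<sigma> \<theta>)) B"
  shows "(\<integral>\<^sup>+x. ennreal (Gd p \<sigma> \<theta> N x) * indicator B x \<partial>Qm p N)
       = ennreal (measure (obs_law p \<sigma> \<theta>) {\<omega>\<in>space (obs_law p \<sigma> \<theta>). T \<omega> \<le> enat N})"
proof -
  interpret prob_space "obs_law p \<sigma> \<theta>" by (rule prob_obs_law[OF s])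
  have BQ: "B \<in> sets (Qm p N)" using B by (simp add: sets_Qm)
  have m: "(\<lambda>x. ennreal (Gd p \<sigma> \<theta> N x)) \<in> borel_measurable (Qm p N)"
    by (rule measurable_compose[OF Gd_meas]) simp
  have "(\<integral>\<^sup>+x. ennreal (Gd p \<sigma> \<theta> N x) * indicator B x \<partial>Qm p N) = emeasure (PiM {1..N} (compM p \<sigma> \<theta>)) B"
    unfolding PN_density[OF s] emeasure_density[OF m BQ] by (rule refl)
  also have "\<dots> = emeasure (obs_law p \<sigma> \<theta>) {\<omega>\<in>space (obs_law p \<sigma> \<theta>). T \<omega> \<le> enat N}"
    using eq by simp
  also have "\<dots> = ennreal (measure (obs_law p \<sigma> \<theta>) {\<omega>\<in>space (obs_law p \<sigma> \<theta>). T \<omega> \<le> enat N})"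
    by (rule emeasure_eq_measure)
  finally show ?thesis .
qed

lemma null_bound:
  assumes s: "\<sigma> > 0" and T: "T \<in> TT p \<sigma> \<delta>"
  shows "measure (obs_law p \<sigma> (\<lambda>i j. 0)) {\<omega>\<in>space (obs_law p \<sigma> (\<lambda>i j. 0)). T \<omega> \<le> enat N} \<le> \<delta>"
proof -
  let ?P = "obs_law p \<sigma> (\<lambda>i j. 0)"
  interpret prob_space ?P by (rule prob_obs_law[OF s])
  have st: "ext_stopping_time p T" using T by (simp add: TT_def)
  have th0: "(\<lambda>i j. 0::real) \<in> Theta0 p" by (auto simp: Theta0_def)
  have d: "measure ?P {\<omega>\<in>space ?P. T \<omega> < \<infinity>} \<le> \<delta>" using T th0 by (auto simp: TT_def)
  have meas: "{\<omega>\<in>space ?P. T \<omega> \<le> enat n} \<in> sets ?P" for n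
    using event_set[OF st s, of n] by blast
  have un: "{\<omega>\<in>space ?P. T \<omega> < \<infinity>} = (\<Union>n. {\<omega>\<in>space ?P. T \<omega> \<le> enat n})"
  proof (intro set_eqI iffI)
    fix \<omega> assume "\<omega> \<in> {\<omega>\<in>space ?P. T \<omega> < \<infinity>}"
    then show "\<omega> \<in> (\<Union>n. {\<omega>\<in>space ?P. T \<omega> \<le> enat n})" by (cases "T \<omega>") auto
  next
    fix \<omega> assume "\<omega> \<in> (\<Union>n. {\<omega>\<in>space ?P. T \<omega> \<le> enat n})"
    then show "\<omega> \<in> {\<omega>\<in>space ?P. T \<omega> < \<infinity>}" by (cases "T \<omega>") auto
  qed
  have "{\<omega>\<in>space ?P. T \<omega> < \<infinity>} \<in> sets ?P" unfolding un using meas by blast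
  then have "measure ?P {\<omega>\<in>space ?P. T \<omega> \<le> enat N} \<le> measure ?P {\<omega>\<in>space ?P. T \<omega> < \<infinity>}"
  proof (rule finite_measure_mono[rotated])
    show "{\<omega>\<in>space ?P. T \<omega> \<le> enat N} \<subseteq> {\<omega>\<in>space ?P. T \<omega> < \<infinity>}"
    proof
      fix x assume "x \<in> {\<omega>\<in>space ?P. T \<omega> \<le> enat N}"
      then show "x \<in> {\<omega>\<in>space ?P. T \<omega> < \<infinity>}" by (cases "T x") auto
    qed
  qed
  then show ?thesis using d by simp
qed

lemma main_lower:
  fixes R :: "nat set" and k p N :: nat
  assumes s: "\<sigma> > 0" and T: "T \<in> TT p \<sigma> \<delta>" and k: "1 \<le> k" "k \<le> p" and e: "0 < \<epsilon>" "\<epsilon> < 1"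
    and w: "real (card ({1..N} \<inter> R)) * \<phi>\<^sup>2 / \<sigma>\<^sup>2 \<le> (\<epsilon>/7) * vkp k p"
  shows "\<exists>g\<in>Gs k (p div k). measure (obs_law p \<sigma> (thetaR R (mu k (p div k) (\<phi> / sqrt k) g)))
           {\<omega>\<in>space (obs_law p \<sigma> (thetaR R (mu k (p div k) (\<phi> / sqrt k) g))). T \<omega> \<le> enat N} \<le> \<delta> + \<epsilon>"
proof -
  define m where "m = p div k"
  define a where "a = \<phi> / sqrt k"
  define G where "G = Gs k m"
  define \<Theta> where "\<Theta> g = thetaR R (mu k m a g)" for g
  define r where "r = card ({1..N} \<inter> R)"
  define wv where "wv = real r * \<phi>\<^sup>2 / \<sigma>\<^sup>2"
  define t where "t = real r * a\<^sup>2 / \<sigma>\<^sup>2"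
  define E where "E \<theta> = measure (obs_law p \<sigma> \<theta>) {\<omega>\<in>space (obs_law p \<sigma> \<theta>). T \<omega> \<le> enat N}" for \<theta>
  have st: "ext_stopping_time p T" using T by (simp add: TT_def)
  have kp: "real k > 0" using k by simp
  have m0: "m > 0" unfolding m_def using k by (simp add: div_greater_zero_iff)
  have km: "k * m \<le> p" unfolding m_def by (simp add: mult.commute div_times_less_eq_dividend)
  have p2: "real p \<le> 2 * real k * real m"
  proof -
    have pe: "p = m * k + p mod k" unfolding m_def by simp
    have "p mod k < k" using k by simp
    then have "p < (m + 1) * k" using pe by (simp add: algebra_simps)
    also have "\<dots> \<le> 2 * k * m" using m0 by (simp add: algebra_simps)
    finally have "p \<le> 2 * k * m" by simp
    then have "real p \<le> real (2 * k * m)" by (simp only: of_nat_le_iff)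
    then show ?thesis by simp
  qed
  have Gfin: "finite G" "G \<noteq> {}"
  proof -
    show "finite G" unfolding G_def Gs_def by (intro finite_PiE) auto
    have "card G > 0" unfolding G_def card_Gs using m0 by simp
    then show "G \<noteq> {}" by auto
  qed
  have a2: "a\<^sup>2 = \<phi>\<^sup>2 / k" unfolding a_def using kp by (simp add: power_divide)
  have t_eq: "t = wv / k" unfolding t_def wv_def a2 by (simp add: field_simps)
  have wv0: "wv \<ge> 0" unfolding wv_def by simp
  have t0: "t \<ge> 0" unfolding t_eq using wv0 kp by simp
  have wvb: "wv \<le> (\<epsilon>/7) * vkp k p" using w unfolding wv_def r_def .
  have nb: "wv\<^sup>2 * exp (wv / k) / p \<le> \<epsilon>\<^sup>2 / 2" by (rule num_bound[OF k wv0 wvb e])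
  have q: "real k * (t\<^sup>2 * exp t) / (2 * real m) \<le> \<epsilon>\<^sup>2 / 2"
  proof -
    have pp: "real p > 0" using k by simp
    have "real k * (t\<^sup>2 * exp t) / (2 * real m) \<le> real k * (t\<^sup>2 * exp t) * real k / p"
    proof -
      have "1 / (2 * real m) \<le> real k / p" using p2 pp m0 kp by (simp add: field_simps)
      then have "real k * (t\<^sup>2 * exp t) * (1 / (2 * real m)) \<le> real k * (t\<^sup>2 * exp t) * (real k / p)"
        by (intro mult_left_mono) auto
      then show ?thesis by simp
    qed
    also have "\<dots> = wv\<^sup>2 * exp (wv / k) / p" unfolding t_eq using kp by (simp add: power2_eq_square field_simps)
    finally show ?thesis using nb by linarith
  qed
  have chi: "(\<Sum>g\<in>G. \<Sum>g'\<in>G. \<Prod>i\<in>{1..N}. \<Prod>j\<in>{..<p}. exp (\<Theta> g i j * \<Theta> g' i j / \<sigma>\<^sup>2))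
               \<le> (1 + \<epsilon>\<^sup>2) * real (card G) ^ 2"
  proof -
    have "(\<Sum>g\<in>G. \<Sum>g'\<in>G. \<Prod>i\<in>{1..N}. \<Prod>j\<in>{..<p}. exp (\<Theta> g i j * \<Theta> g' i j / \<sigma>\<^sup>2))
        = (2 * real m * (exp t + exp (-t) + 2 * (real m - 1))) ^ k"
      unfolding G_def \<Theta>_def by (rule chi_sum[OF m0 km]) (simp add: t_def r_def)
    also have "\<dots> \<le> (1 + \<epsilon>\<^sup>2) * (real ((2 * m) ^ k))\<^sup>2"
      by (rule chi_final[OF m0 k(1) t0 q e])
    finally show ?thesis unfolding G_def card_Gs .
  qed
  obtain B where B: "B \<in> sets (PiM {1..N} (bor p))" and
    Beq: "\<And>\<theta>. emeasure (obs_law p \<sigma> \<theta>) {\<omega>\<in>space (obs_law p \<sigma> \<theta>). T \<omega> \<le> enat N}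
       = emeasure (PiM {1..N} (compM p \<sigma> \<theta>)) B"
    using event_set[OF st s, of N] by blast
  have BQ: "B \<in> sets (Qm p N)" using B by (simp add: sets_Qm)
  have I: "(\<integral>\<^sup>+x. ennreal (Gd p \<sigma> \<theta> N x) * indicator B x \<partial>Qm p N) = ennreal (E \<theta>)" for \<theta>
    unfolding E_def by (rule emeasure_T_le[OF s st B Beq])
  have mb: "ennreal (1 / real (card G)) * (\<Sum>g\<in>G. ennreal (E (\<Theta> g))) \<le> ennreal (E (\<lambda>i j. 0)) + ennreal \<epsilon>"
    using mixture_bound[OF s Gfin e(1) BQ chi] unfolding I .
  have E0: "E \<theta> \<ge> 0" for \<theta> unfolding E_def by simp
  have "ennreal ((1 / real (card G)) * (\<Sum>g\<in>G. E (\<Theta> g))) \<le> ennreal (E (\<lambda>i j. 0) + \<epsilon>)"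
  proof -
    have sn: "0 \<le> (\<Sum>g\<in>G. E (\<Theta> g))" using E0 by (simp add: sum_nonneg)
    have l: "ennreal ((1 / real (card G)) * (\<Sum>g\<in>G. E (\<Theta> g))) = ennreal (1 / real (card G)) * ennreal (\<Sum>g\<in>G. E (\<Theta> g))"
      by (rule ennreal_mult) (simp_all add: sn)
    have r: "ennreal (E (\<lambda>i j. 0) + \<epsilon>) = ennreal (E (\<lambda>i j. 0)) + ennreal \<epsilon>"
      by (rule ennreal_plus) (use E0 e in auto)
    have "(\<Sum>g\<in>G. ennreal (E (\<Theta> g))) = ennreal (\<Sum>g\<in>G. E (\<Theta> g))"
      using E0 by (simp add: sum_ennreal)
    then show ?thesis unfolding l r using mb by simp
  qed
  then have "(1 / real (card G)) * (\<Sum>g\<in>G. E (\<Theta> g)) \<le> E (\<lambda>i j. 0) + \<epsilon>"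
    using E0 e by (subst (asm) ennreal_le_iff) (auto intro: add_nonneg_nonneg)
  also have "\<dots> \<le> \<delta> + \<epsilon>" using null_bound[OF s T, of N] unfolding E_def by simp
  finally have "\<exists>g\<in>G. E (\<Theta> g) \<le> \<delta> + \<epsilon>" by (rule avg_exists[OF Gfin])
  then show ?thesis unfolding E_def \<Theta>_def G_def m_def a_def by blast
qed



lemma theta_in1:
  assumes g: "g \<in> Gs k (p div k)" and k: "1 \<le> k" "k \<le> p" and ph: "\<phi> > 0"
  shows "thetaR {..\<tau>} (mu k (p div k) (\<phi> / sqrt k) g) \<in> ThetaCP k p \<tau> \<phi>"
proof -
  have km: "k * (p div k) \<le> p" by (simp add: mult.commute div_times_less_eq_dividend)
  have l2: "l2norm p (\<lambda>j. mu k (p div k) (\<phi> / sqrt k) g j - 0) = \<phi>"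
    unfolding l2norm_def using l2_mu[OF g km, of "\<phi> / sqrt k"] k ph by (simp add: power_divide)
  have l0: "l0norm p (\<lambda>j. mu k (p div k) (\<phi> / sqrt k) g j - 0) \<le> k"
    unfolding l0norm_def using l0_mu[OF g, of p "\<phi> / sqrt k"] by simp
  show ?thesis unfolding ThetaCP_def
    by (intro CollectI exI[of _ "mu k (p div k) (\<phi> / sqrt k) g"] exI[of _ "\<lambda>j. 0"] conjI allI impI l2 l0)
       (auto simp: thetaR_def)
qed

lemma theta_in2:
  assumes g: "g \<in> Gs k (p div k)" and k: "1 \<le> k" "k \<le> p" and ph: "\<phi> > 0"
  shows "thetaR {\<tau><..} (mu k (p div k) (\<phi> / sqrt k) g) \<in> ThetaCP k p \<tau> \<phi>"
proof -
  have km: "k * (p div k) \<le> p" by (simp add: mult.commute div_times_less_eq_dividend)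
  have l2: "l2norm p (\<lambda>j. 0 - mu k (p div k) (\<phi> / sqrt k) g j) = \<phi>"
    unfolding l2norm_def using l2_mu[OF g km, of "\<phi> / sqrt k"] k ph by (simp add: power_divide)
  have l0: "l0norm p (\<lambda>j. 0 - mu k (p div k) (\<phi> / sqrt k) g j) \<le> k"
    unfolding l0norm_def using l0_mu[OF g, of p "\<phi> / sqrt k"] by simp
  show ?thesis unfolding ThetaCP_def
    by (intro CollectI exI[of _ "\<lambda>j. 0"] exI[of _ "mu k (p div k) (\<phi> / sqrt k) g"] conjI allI impI l2 l0)
       (auto simp: thetaR_def)
qed

lemma TT_ne: "0 \<le> \<delta> \<Longrightarrow> (\<lambda>\<omega>. \<infinity>) \<in> TT p \<sigma> \<delta>"
  unfolding TT_def ext_stopping_time_def by simp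

lemma sup_ge:
  assumes s: "\<sigma> > 0" and th: "\<theta>0 \<in> \<Theta>" and u: "u \<le> measure (obs_law p \<sigma> \<theta>0) (S \<theta>0)"
  shows "u \<le> (SUP \<theta>\<in>\<Theta>. measure (obs_law p \<sigma> \<theta>) (S \<theta>))"
proof (rule cSUP_upper2[of "\<lambda>\<theta>. measure (obs_law p \<sigma> \<theta>) (S \<theta>)" \<Theta> \<theta>0 u, OF _ th u])
  show "bdd_above ((\<lambda>\<theta>. measure (obs_law p \<sigma> \<theta>) (S \<theta>)) ` \<Theta>)"
    by (rule bdd_aboveI[of _ 1]) (auto intro: prob_space.prob_le_1[OF prob_obs_law[OF s]])
qed

lemma compl_meas:
  assumes s: "\<sigma> > 0" and T: "ext_stopping_time p T"
    and S: "S = space (obs_law p \<sigma> \<theta>) - {\<omega>\<in>space (obs_law p \<sigma> \<theta>). T \<omega> \<le> enat N}"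
  shows "measure (obs_law p \<sigma> \<theta>) S = 1 - measure (obs_law p \<sigma> \<theta>) {\<omega>\<in>space (obs_law p \<sigma> \<theta>). T \<omega> \<le> enat N}"
proof -
  interpret prob_space "obs_law p \<sigma> \<theta>" by (rule prob_obs_law[OF s])
  have "{\<omega>\<in>space (obs_law p \<sigma> \<theta>). T \<omega> \<le> enat N} \<in> sets (obs_law p \<sigma> \<theta>)"
    using event_set[OF T s, of N] by blast
  then show ?thesis unfolding S by (rule prob_compl)
qed

lemma part1:
  assumes e: "0 < \<epsilon>" "\<epsilon> < 1" and d: "0 < \<delta>"
    and H: "1 \<le> k" "k \<le> p" "\<phi> > 0" "\<sigma> > 0"
    and A: "(\<phi>\<^sup>2 / \<sigma>\<^sup>2) * real \<tau> \<le> (\<epsilon>/7) * vkp k p" and n: "n \<ge> \<tau>"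
  shows "(INF T\<in>TT p \<sigma> \<delta>. SUP \<theta>\<in>ThetaCP k p \<tau> \<phi>.
                 measure (obs_law p \<sigma> \<theta>)
                   {\<omega>\<in>space (obs_law p \<sigma> \<theta>). T \<omega> > enat (\<tau> + n)})
              \<ge> 1 - \<delta> - \<epsilon>"
proof (rule cINF_greatest)
  show "TT p \<sigma> \<delta> \<noteq> {}" using TT_ne[of \<delta>] d by auto
  fix T assume T: "T \<in> TT p \<sigma> \<delta>"
  have st: "ext_stopping_time p T" using T by (simp add: TT_def)
  have card: "card ({1..\<tau> + n} \<inter> {..\<tau>}) = \<tau>"
  proof -
    have "{1..\<tau> + n} \<inter> {..\<tau>} = {1..\<tau>}" by auto
    then show ?thesis by simp
  qed
  have w: "real (card ({1..\<tau> + n} \<inter> {..\<tau>})) * \<phi>\<^sup>2 / \<sigma>\<^sup>2 \<le> (\<epsilon>/7) * vkp k p"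
    using A unfolding card by (simp add: field_simps)
  obtain g where g: "g \<in> Gs k (p div k)" and
    mg: "measure (obs_law p \<sigma> (thetaR {..\<tau>} (mu k (p div k) (\<phi> / sqrt k) g)))
           {\<omega>\<in>space (obs_law p \<sigma> (thetaR {..\<tau>} (mu k (p div k) (\<phi> / sqrt k) g))). T \<omega> \<le> enat (\<tau> + n)} \<le> \<delta> + \<epsilon>"
    using main_lower[OF H(4) T H(1,2) e w] by blast
  let ?th = "thetaR {..\<tau>} (mu k (p div k) (\<phi> / sqrt k) g)"
  have Seq: "{\<omega>\<in>space (obs_law p \<sigma> ?th). T \<omega> > enat (\<tau> + n)}
      = space (obs_law p \<sigma> ?th) - {\<omega>\<in>space (obs_law p \<sigma> ?th). T \<omega> \<le> enat (\<tau> + n)}"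
    by (auto simp: not_le)
  have "1 - \<delta> - \<epsilon> \<le> measure (obs_law p \<sigma> ?th) {\<omega>\<in>space (obs_law p \<sigma> ?th). T \<omega> > enat (\<tau> + n)}"
    using compl_meas[OF H(4) st Seq] mg by simp
  then show "1 - \<delta> - \<epsilon> \<le> (SUP \<theta>\<in>ThetaCP k p \<tau> \<phi>.
                 measure (obs_law p \<sigma> \<theta>) {\<omega>\<in>space (obs_law p \<sigma> \<theta>). T \<omega> > enat (\<tau> + n)})"
    by (rule sup_ge[OF H(4) theta_in1[OF g H(1,2,3)], where S="\<lambda>\<theta>. {\<omega>\<in>space (obs_law p \<sigma> \<theta>). T \<omega> > enat (\<tau> + n)}"])
qed

lemma part2:
  assumes e: "0 < \<epsilon>" "\<epsilon> < 1" and d: "0 < \<delta>"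
    and H: "1 \<le> k" "k \<le> p" "\<phi> > 0" "\<sigma> > 0"
  shows "(INF T\<in>TT p \<sigma> \<delta>. SUP \<theta>\<in>ThetaCP k p \<tau> \<phi>.
              measure (obs_law p \<sigma> \<theta>)
                {\<omega>\<in>space (obs_law p \<sigma> \<theta>).
                   (T \<omega> = \<infinity> \<or> (\<exists>t::nat. T \<omega> = enat t \<and>
                      real t - real \<tau> > (\<epsilon>/7) * (\<sigma>\<^sup>2 / \<phi>\<^sup>2) * vkp k p))})
           \<ge> 1 - \<delta> - \<epsilon>"
proof (rule cINF_greatest)
  show "TT p \<sigma> \<delta> \<noteq> {}" using TT_ne[of \<delta>] d by auto
  fix T assume T: "T \<in> TT p \<sigma> \<delta>"
  have st: "ext_stopping_time p T" using T by (simp add: TT_def)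
  define X where "X = (\<epsilon>/7) * (\<sigma>\<^sup>2 / \<phi>\<^sup>2) * vkp k p"
  have v0: "vkp k p \<ge> 0"
  proof (cases "real k > sqrt (real p)")
    case True then show ?thesis by (simp add: vkp_def)
  next
    case False
    have kp: "real k > 0" using H by simp
    have "real k \<le> sqrt p" using False by simp
    then have "(real k)\<^sup>2 \<le> (sqrt p)\<^sup>2" by (rule power_mono) simp
    then have kk: "(real k)\<^sup>2 \<le> p" by simp
    have e1: "1 \<le> exp (1::real)" by simp
    have "real p \<le> exp 1 * real p" using mult_right_mono[OF e1, of "real p"] by simp
    then have "(real k)\<^sup>2 \<le> exp 1 * real p" using kk by linarith
    then have "1 \<le> exp 1 * real p / (real k)\<^sup>2" using kp by (simp add: le_divide_eq)
    then have "ln (exp 1 * real p / (real k)\<^sup>2) \<ge> 0" by simp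
    then show ?thesis using False by (simp add: vkp_def)
  qed
  have X0: "X \<ge> 0" unfolding X_def using e v0 by simp
  define M where "M = nat \<lfloor>X\<rfloor>"
  have MX: "real M \<le> X" unfolding M_def using X0 by simp
  have Mi: "int M = \<lfloor>X\<rfloor>" unfolding M_def using X0 by simp
  have card: "card ({1..\<tau> + M} \<inter> {\<tau><..}) = M"
  proof -
    have "{1..\<tau> + M} \<inter> {\<tau><..} = {\<tau><..\<tau> + M}" by auto
    then show ?thesis by simp
  qed
  have w: "real (card ({1..\<tau> + M} \<inter> {\<tau><..})) * \<phi>\<^sup>2 / \<sigma>\<^sup>2 \<le> (\<epsilon>/7) * vkp k p"
  proof -
    have "real M * \<phi>\<^sup>2 / \<sigma>\<^sup>2 \<le> X * \<phi>\<^sup>2 / \<sigma>\<^sup>2" using MX H by (simp add: divide_right_mono mult_right_mono)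
    also have "\<dots> = (\<epsilon>/7) * vkp k p" unfolding X_def using H by (simp add: field_simps)
    finally show ?thesis unfolding card .
  qed
  obtain g where g: "g \<in> Gs k (p div k)" and
    mg: "measure (obs_law p \<sigma> (thetaR {\<tau><..} (mu k (p div k) (\<phi> / sqrt k) g)))
           {\<omega>\<in>space (obs_law p \<sigma> (thetaR {\<tau><..} (mu k (p div k) (\<phi> / sqrt k) g))). T \<omega> \<le> enat (\<tau> + M)} \<le> \<delta> + \<epsilon>"
    using main_lower[OF H(4) T H(1,2) e w] by blast
  let ?th = "thetaR {\<tau><..} (mu k (p div k) (\<phi> / sqrt k) g)"
  have key: "(real t - real \<tau> > X) \<longleftrightarrow> \<not> (t \<le> \<tau> + M)" for t :: nat
  proof -
    have "(real t - real \<tau> \<le> X) \<longleftrightarrow> (int t - int \<tau> \<le> \<lfloor>X\<rfloor>)"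
      by (simp add: le_floor_iff)
    also have "\<dots> \<longleftrightarrow> t \<le> \<tau> + M" using Mi by linarith
    finally show ?thesis by linarith
  qed
  have Seq: "{\<omega>\<in>space (obs_law p \<sigma> ?th). (T \<omega> = \<infinity> \<or> (\<exists>t::nat. T \<omega> = enat t \<and> real t - real \<tau> > X))}
      = space (obs_law p \<sigma> ?th) - {\<omega>\<in>space (obs_law p \<sigma> ?th). T \<omega> \<le> enat (\<tau> + M)}"
  proof (intro set_eqI)
    fix \<omega>
    show "\<omega> \<in> {\<omega>\<in>space (obs_law p \<sigma> ?th). (T \<omega> = \<infinity> \<or> (\<exists>t::nat. T \<omega> = enat t \<and> real t - real \<tau> > X))}
      \<longleftrightarrow> \<omega> \<in> space (obs_law p \<sigma> ?th) - {\<omega>\<in>space (obs_law p \<sigma> ?th). T \<omega> \<le> enat (\<tau> + M)}"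
    proof (cases "T \<omega>")
      case (enat t)
      have "(T \<omega> = \<infinity> \<or> (\<exists>t::nat. T \<omega> = enat t \<and> real t - real \<tau> > X)) \<longleftrightarrow> real t - real \<tau> > X"
        using enat by simp
      moreover have "(T \<omega> \<le> enat (\<tau> + M)) \<longleftrightarrow> t \<le> \<tau> + M" using enat by simp
      ultimately show ?thesis using key[of t] by blast
    next
      case infinity
      then show ?thesis by simp
    qed
  qed
  have "1 - \<delta> - \<epsilon> \<le> measure (obs_law p \<sigma> ?th) {\<omega>\<in>space (obs_law p \<sigma> ?th). (T \<omega> = \<infinity> \<or> (\<exists>t::nat. T \<omega> = enat t \<and> real t - real \<tau> > X))}"
    using compl_meas[OF H(4) st Seq] mg by simp
  then show "1 - \<delta> - \<epsilon> \<le> (SUP \<theta>\<in>ThetaCP k p \<tau> \<phi>.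
              measure (obs_law p \<sigma> \<theta>)
                {\<omega>\<in>space (obs_law p \<sigma> \<theta>).
                   (T \<omega> = \<infinity> \<or> (\<exists>t::nat. T \<omega> = enat t \<and>
                      real t - real \<tau> > (\<epsilon>/7) * (\<sigma>\<^sup>2 / \<phi>\<^sup>2) * vkp k p))})"
    unfolding X_def[symmetric]
    by (rule sup_ge[OF H(4) theta_in2[OF g H(1,2,3)], where S="\<lambda>\<theta>. {\<omega>\<in>space (obs_law p \<sigma> \<theta>). (T \<omega> = \<infinity> \<or> (\<exists>t::nat. T \<omega> = enat t \<and> real t - real \<tau> > X))}"])
qed

theorem proposition8:
  "\<forall>\<epsilon>::real. 0 < \<epsilon> \<and> \<epsilon> < 1 \<longrightarrow> (\<exists>c::real. c > 0 \<and>
    (\<forall>\<delta>::real. 0 < \<delta> \<and> \<delta> < 1 \<and> \<epsilon> < 1 - \<delta> \<longrightarrow>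
     (\<forall>(\<tau>::nat) (p::nat) (k::nat) (\<phi>::real) (\<sigma>::real).
        1 \<le> \<tau> \<and> 1 \<le> p \<and> 1 \<le> k \<and> k \<le> p \<and> \<phi> > 0 \<and> \<sigma> > 0 \<longrightarrow>
        ((\<phi>\<^sup>2 / \<sigma>\<^sup>2) * real \<tau> \<le> c * vkp k p \<longrightarrow>
           (\<forall>n::nat. n \<ge> \<tau> \<longrightarrow>
              (INF T\<in>TT p \<sigma> \<delta>. SUP \<theta>\<in>ThetaCP k p \<tau> \<phi>.
                 measure (obs_law p \<sigma> \<theta>)
                   {\<omega>\<in>space (obs_law p \<sigma> \<theta>). T \<omega> > enat (\<tau> + n)})
              \<ge> 1 - \<delta> - \<epsilon>)) \<and>
        ((\<phi>\<^sup>2 / \<sigma>\<^sup>2) * real \<tau> > c * vkp k p \<longrightarrow>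
           (INF T\<in>TT p \<sigma> \<delta>. SUP \<theta>\<in>ThetaCP k p \<tau> \<phi>.
              measure (obs_law p \<sigma> \<theta>)
                {\<omega>\<in>space (obs_law p \<sigma> \<theta>).
                   (T \<omega> = \<infinity> \<or> (\<exists>t::nat. T \<omega> = enat t \<and>
                      real t - real \<tau> > c * (\<sigma>\<^sup>2 / \<phi>\<^sup>2) * vkp k p))})
           \<ge> 1 - \<delta> - \<epsilon>))))"

proof (intro allI impI)
  fix \<epsilon> :: real assume e: "0 < \<epsilon> \<and> \<epsilon> < 1"
  show "\<exists>c::real. c > 0 \<and>
    (\<forall>\<delta>::real. 0 < \<delta> \<and> \<delta> < 1 \<and> \<epsilon> < 1 - \<delta> \<longrightarrow>
     (\<forall>(\<tau>::nat) (p::nat) (k::nat) (\<phi>::real) (\<sigma>::real).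
        1 \<le> \<tau> \<and> 1 \<le> p \<and> 1 \<le> k \<and> k \<le> p \<and> \<phi> > 0 \<and> \<sigma> > 0 \<longrightarrow>
        ((\<phi>\<^sup>2 / \<sigma>\<^sup>2) * real \<tau> \<le> c * vkp k p \<longrightarrow>
           (\<forall>n::nat. n \<ge> \<tau> \<longrightarrow>
              (INF T\<in>TT p \<sigma> \<delta>. SUP \<theta>\<in>ThetaCP k p \<tau> \<phi>.
                 measure (obs_law p \<sigma> \<theta>)
                   {\<omega>\<in>space (obs_law p \<sigma> \<theta>). T \<omega> > enat (\<tau> + n)})
              \<ge> 1 - \<delta> - \<epsilon>)) \<and>
        ((\<phi>\<^sup>2 / \<sigma>\<^sup>2) * real \<tau> > c * vkp k p \<longrightarrow>
           (INF T\<in>TT p \<sigma> \<delta>. SUP \<theta>\<in>ThetaCP k p \<tau> \<phi>.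
              measure (obs_law p \<sigma> \<theta>)
                {\<omega>\<in>space (obs_law p \<sigma> \<theta>).
                   (T \<omega> = \<infinity> \<or> (\<exists>t::nat. T \<omega> = enat t \<and>
                      real t - real \<tau> > c * (\<sigma>\<^sup>2 / \<phi>\<^sup>2) * vkp k p))})
           \<ge> 1 - \<delta> - \<epsilon>)))"
  proof (intro exI[of _ "\<epsilon>/7"] conjI allI impI)
    show "\<epsilon>/7 > 0" using e by simp
  next
    fix \<delta> :: real and \<tau> p k :: nat and \<phi> \<sigma> :: real and n :: nat
    assume d: "0 < \<delta> \<and> \<delta> < 1 \<and> \<epsilon> < 1 - \<delta>"
      and H: "1 \<le> \<tau> \<and> 1 \<le> p \<and> 1 \<le> k \<and> k \<le> p \<and> \<phi> > 0 \<and> \<sigma> > 0"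
      and A: "(\<phi>\<^sup>2 / \<sigma>\<^sup>2) * real \<tau> \<le> \<epsilon> / 7 * vkp k p" and n: "n \<ge> \<tau>"
    show "(INF T\<in>TT p \<sigma> \<delta>. SUP \<theta>\<in>ThetaCP k p \<tau> \<phi>.
                 measure (obs_law p \<sigma> \<theta>)
                   {\<omega>\<in>space (obs_law p \<sigma> \<theta>). T \<omega> > enat (\<tau> + n)})
              \<ge> 1 - \<delta> - \<epsilon>"
      using part1[of \<epsilon> \<delta> k p \<phi> \<sigma> \<tau> n] e d H A n by simp
  next
    fix \<delta> :: real and \<tau> p k :: nat and \<phi> \<sigma> :: real
    assume d: "0 < \<delta> \<and> \<delta> < 1 \<and> \<epsilon> < 1 - \<delta>"
      and H: "1 \<le> \<tau> \<and> 1 \<le> p \<and> 1 \<le> k \<and> k \<le> p \<and> \<phi> > 0 \<and> \<sigma> > 0"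
    show "(INF T\<in>TT p \<sigma> \<delta>. SUP \<theta>\<in>ThetaCP k p \<tau> \<phi>.
              measure (obs_law p \<sigma> \<theta>)
                {\<omega>\<in>space (obs_law p \<sigma> \<theta>).
                   (T \<omega> = \<infinity> \<or> (\<exists>t::nat. T \<omega> = enat t \<and>
                      real t - real \<tau> > \<epsilon> / 7 * (\<sigma>\<^sup>2 / \<phi>\<^sup>2) * vkp k p))})
           \<ge> 1 - \<delta> - \<epsilon>"
      using part2[of \<epsilon> \<delta> k p \<phi> \<sigma> \<tau>] e d H by simp
  qed
qed


end
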